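(* Let $p$ be a prime, $q=p^f$ with $f\ge 1$, $m\ge 2$ an integer, and $\omega$ a primitive element of $\mathbb{F}_{q^m}$. Let $N$ be a positive integer dividing $q^m-1$, and let $C_0^{(N,q^m)}=\langle \omega^N\rangle$ be the subgroup of index $N$ of $\mathbb{F}_{q^m}^\ast$. Assume that $\mathbb{F}_q^\ast\le C_0^{(N,q^m)}\le \mathbb{F}_{q^m}^\ast$ and that the Cayley graph $\mathrm{Cay}(\mathbb{F}_{q^m},C_0^{(N,q^m)})$ is strongly regular. Let $I\subseteq\{0,1,\dots,N-1\}$ be the subdifference set defined below, and let $$H=\{(y,\,y^{-1}x\omega^\ell)\mid x\in C_0^{(N,q^m)},\ y\in \mathbb{F}_{q^m}^\ast,\ \ell\in I\}\subseteq \mathbb{F}_{q^m}\times\mathbb{F}_{q^m}.$$ Then $\mathrm{Cay}(\mathbb{F}_{q^m}\times\mathbb{F}_{q^m},H)$ is a strongly regular graph with parameters $(n^2,\,r(n-1),\,n+r^2-3r,\,r^2-r)$, where $n=q^m$ and $r=(q^m-1)|I|/N$.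
   Context: For an additive group $G$ and $D\subseteq G$ with $0\notin D$, $-D=D$, $\mathrm{Cay}(G,D)$ is the graph on $G$ in which $x,y$ are adjacent iff $x-y\in D$. A strongly regular graph with parameters $(v,k,\lambda,\mu)$ is a $k$-regular graph on $v$ vertices, neither complete nor edgeless, in which adjacent vertices have $\lambda$ common neighbours and non-adjacent vertices have $\mu$ common neighbours. Subdifference set: for $0\le i\le N-1$ let $C_i^{(N,q^m)}=\omega^i C_0^{(N,q^m)}$ and let $n_i=|\{x\in C_i^{(N,q^m)}:\mathrm{Tr}_{q^m/q}(x)=0\}|/(q-1)$ (the number of points of the hyperplane $\mathrm{Tr}_{q^m/q}(x)=0$ of $\mathrm{PG}(m-1,q)$ lying in the coset $C_i^{(N,q^m)}/\mathbb{F}_q^\ast$). Under the hypotheses the numbers $n_i$ take exactly two distinct values, so $n_i-n_0\in\{0,\delta\}$ for a fixed nonzero integer $\delta$; then $I=\{0\le i\le N-1: n_i-n_0=\delta\}$. *)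

theory Defs
  imports Main "HOL-Library.Product_Plus" "HOL-Computational_Algebra.Primes"
begin

definition cayley_adj :: "'g::ab_group_add set \<Rightarrow> 'g \<Rightarrow> 'g \<Rightarrow> bool" where
  "cayley_adj D x y \<longleftrightarrow> x - y \<in> D"

definition srg :: "'v set \<Rightarrow> ('v \<Rightarrow> 'v \<Rightarrow> bool) \<Rightarrow> int \<Rightarrow> int \<Rightarrow> int \<Rightarrow> int \<Rightarrow> bool" where
  "srg V E v k l u \<longleftrightarrow>
     finite V \<and> int (card V) = v \<and>
     (\<forall>x\<in>V. \<forall>y\<in>V. E x y \<longrightarrow> E y x) \<and> (\<forall>x\<in>V. \<not> E x x) \<and>
     (\<forall>x\<in>V. int (card {y\<in>V. E x y}) = k) \<and>
     (\<forall>x\<in>V. \<forall>y\<in>V. x \<noteq> y \<and> E x y \<longrightarrow> int (card {z\<in>V. E x z \<and> E y z}) = l) \<and>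
     (\<forall>x\<in>V. \<forall>y\<in>V. x \<noteq> y \<and> \<not> E x y \<longrightarrow> int (card {z\<in>V. E x z \<and> E y z}) = u) \<and>
     (\<exists>x\<in>V. \<exists>y\<in>V. x \<noteq> y \<and> E x y) \<and>
     (\<exists>x\<in>V. \<exists>y\<in>V. x \<noteq> y \<and> \<not> E x y)"

definition is_srg :: "'v set \<Rightarrow> ('v \<Rightarrow> 'v \<Rightarrow> bool) \<Rightarrow> bool" where
  "is_srg V E \<longleftrightarrow> (\<exists>v k l u. srg V E v k l u)"

definition primitive_elem :: "'a::field \<Rightarrow> bool" where
  "primitive_elem w \<longleftrightarrow> (\<forall>x. x \<noteq> 0 \<longrightarrow> (\<exists>k::nat. x = w ^ k))"

definition Fq_star :: "nat \<Rightarrow> 'a::field set" where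
  "Fq_star q = {x. x \<noteq> 0 \<and> x ^ q = x}"

definition cyclo_C0 :: "nat \<Rightarrow> 'a::field \<Rightarrow> 'a set" where
  "cyclo_C0 N w = {w ^ (N * k) | k. True}"

definition cyclo_C :: "nat \<Rightarrow> 'a::field \<Rightarrow> nat \<Rightarrow> 'a set" where
  "cyclo_C N w i = (\<lambda>x. w ^ i * x) ` cyclo_C0 N w"

definition trace_rel :: "nat \<Rightarrow> nat \<Rightarrow> 'a::field \<Rightarrow> 'a" where
  "trace_rel q m x = (\<Sum>i<m. x ^ (q ^ i))"

definition sub_n :: "nat \<Rightarrow> nat \<Rightarrow> nat \<Rightarrow> 'a::field \<Rightarrow> nat \<Rightarrow> int" where
  "sub_n q m N w i = int (card {x \<in> cyclo_C N w i. trace_rel q m x = 0} div (q - 1))"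

definition subdiff_delta :: "nat \<Rightarrow> nat \<Rightarrow> nat \<Rightarrow> 'a::field \<Rightarrow> int" where
  "subdiff_delta q m N w =
     (THE d. d \<noteq> 0 \<and> (\<exists>i<N. sub_n q m N w i - sub_n q m N w 0 = d))"

definition subdiff_set :: "nat \<Rightarrow> nat \<Rightarrow> nat \<Rightarrow> 'a::field \<Rightarrow> nat set" where
  "subdiff_set q m N w =
     {i. i < N \<and> sub_n q m N w i - sub_n q m N w 0 = subdiff_delta q m N w}"

end

theory Submission
  imports Defs "HOL-Computational_Algebra.Polynomial"
begin

locale fq_space =
  fixes K :: "'a::field set" and q :: nat
    and sc :: "'a \<Rightarrow> 'v::{ab_group_add,finite} \<Rightarrow> 'v"
    and B :: "'v \<Rightarrow> 'v \<Rightarrow> 'a"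
  assumes K0: "0 \<in> K" and K1: "1 \<in> K"
    and Kadd: "a \<in> K \<Longrightarrow> b \<in> K \<Longrightarrow> a + b \<in> K"
    and Kmult: "a \<in> K \<Longrightarrow> b \<in> K \<Longrightarrow> a * b \<in> K"
    and Kneg: "a \<in> K \<Longrightarrow> - a \<in> K"
    and Kinv: "a \<in> K \<Longrightarrow> inverse a \<in> K"
    and finK: "finite K" and cardK: "card K = q" and q2: "q \<ge> 2"
    and sc_addl: "sc (a + b) v = sc a v + sc b v"
    and sc_addr: "sc a (v + w) = sc a v + sc a w"
    and sc_assoc: "sc a (sc b v) = sc (a * b) v"
    and sc_one: "sc 1 v = v"
    and B_add: "B (v + w) u = B v u + B w u"
    and B_sc: "a \<in> K \<Longrightarrow> B (sc a v) u = a * B v u"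
    and B_sym: "B v u = B u v"
    and B_K: "B v u \<in> K"
    and B_nondeg: "(\<And>u. B v u = 0) \<Longrightarrow> v = 0"
begin

lemma sc_zero_l [simp]: "sc 0 v = 0"
  using sc_addl[of 0 0 v] by simp

lemma sc_zero_r [simp]: "sc a 0 = 0"
  using sc_addr[of a 0 0] by simp

lemma sc_inv_cancel: "a \<noteq> 0 \<Longrightarrow> sc (inverse a) (sc a v) = v"
  by (simp add: sc_assoc sc_one)

lemma sc_inv_cancel2: "a \<noteq> 0 \<Longrightarrow> sc a (sc (inverse a) v) = v"
  by (simp add: sc_assoc sc_one)

lemma sc_eq_0: "sc a v = 0 \<Longrightarrow> a = 0 \<or> v = 0"
  by (metis sc_inv_cancel sc_zero_r)

lemma B_zero [simp]: "B 0 u = 0"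
  using B_add[of 0 0 u] by (metis add.right_neutral add_left_cancel)

lemma B_zero_r [simp]: "B u 0 = 0"
  using B_sym B_zero by metis

lemma B_neg: "B (- v) u = - B v u"
  using B_add[of v "-v" u] by (simp add: eq_neg_iff_add_eq_0 add.commute)

lemma B_diff: "B (v - w) u = B v u - B w u"
  using B_add[of v "-w" u] B_neg[of w u] by simp

lemma B_add_r: "B u (v + w) = B u v + B u w"
  using B_add B_sym by metis

lemma B_sc_r: "a \<in> K \<Longrightarrow> B u (sc a v) = a * B u v"
  using B_sc B_sym by metis

lemma exists_one: assumes "w \<noteq> 0" shows "\<exists>v. B v w = 1"
proof -
  obtain u where u: "B w u \<noteq> 0" using B_nondeg assms by blast
  define e where "e = B u w"
  have e: "e \<noteq> 0" "e \<in> K" using u B_sym B_K e_def by auto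
  have "B (sc (inverse e) u) w = 1" using e Kinv by (simp add: B_sc e_def[symmetric])
  then show ?thesis by blast
qed

lemma card_UNIV_group:
  fixes g :: "'v \<Rightarrow> 'b"
  assumes "finite T" "\<And>v. g v \<in> T"
  shows "card (UNIV :: 'v set) = (\<Sum>t\<in>T. card {v. g v = t})"
  using sum.group[of "UNIV :: 'v set" T g "\<lambda>_. 1::nat"] assms by (auto simp: image_subset_iff)

lemma fiber1: assumes "w \<noteq> 0" "c \<in> K"
  shows "card {v. B v w = c} * q = card (UNIV :: 'v set)"
proof -
  obtain v0 where v0: "B v0 w = 1" using exists_one assms by blast
  have eq: "card {v. B v w = c} = card {v. B v w = 0}" if "c \<in> K" for c
  proof -
    have "{v. B v w = c} = (\<lambda>v. v + sc c v0) ` {v. B v w = 0}"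
    proof (rule set_eqI, rule iffI)
      fix x assume "x \<in> {v. B v w = c}"
      then have "x - sc c v0 \<in> {v. B v w = 0}" using that v0 by (simp add: B_diff B_sc)
      then show "x \<in> (\<lambda>v. v + sc c v0) ` {v. B v w = 0}" by force
    next
      fix x assume "x \<in> (\<lambda>v. v + sc c v0) ` {v. B v w = 0}"
      then show "x \<in> {v. B v w = c}" using that v0 by (auto simp: B_add B_sc)
    qed
    moreover have "inj (\<lambda>v. v + sc c v0)" by (simp add: inj_def)
    ultimately show ?thesis by (simp add: card_image inj_on_subset)
  qed
  have "card (UNIV :: 'v set) = (\<Sum>t\<in>K. card {v. B v w = t})"
    by (rule card_UNIV_group) (use finK B_K in auto)
  also have "\<dots> = (\<Sum>t\<in>K. card {v. B v w = 0})" by (rule sum.cong) (use eq in auto)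
  also have "\<dots> = q * card {v. B v w = 0}" using cardK by simp
  finally show ?thesis using eq[OF assms(2)] by simp
qed

lemma exists_10:
  assumes "\<not> (\<exists>t\<in>K. w1 = sc t w2)" "w2 \<noteq> 0"
  shows "\<exists>v. B v w1 = 1 \<and> B v w2 = 0"
proof (rule ccontr)
  assume nex: "\<not> (\<exists>v. B v w1 = 1 \<and> B v w2 = 0)"
  have all: "B v w1 = 0" if "B v w2 = 0" for v
  proof (rule ccontr)
    assume ne: "B v w1 \<noteq> 0"
    have "B (sc (inverse (B v w1)) v) w1 = 1" using ne B_K Kinv by (simp add: B_sc)
    moreover have "B (sc (inverse (B v w1)) v) w2 = 0" using that B_K Kinv by (simp add: B_sc)
    ultimately show False using nex by blast
  qed
  obtain v0 where v0: "B v0 w2 = 1" using exists_one assms by blast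
  define t where "t = B v0 w1"
  have tK: "t \<in> K" using B_K t_def by auto
  have "B v (w1 - sc t w2) = 0" for v
  proof -
    have "B (v - sc (B v w2) v0) w2 = 0" using v0 B_K by (simp add: B_diff B_sc)
    then have "B (v - sc (B v w2) v0) w1 = 0" by (rule all)
    then have "B v w1 = B v w2 * t" using B_K by (simp add: B_diff B_sc t_def)
    then show ?thesis using tK
      by (simp add: B_diff B_sc B_sym[of v] B_sym[of "_ - _"] mult.commute)
  qed
  then have "w1 - sc t w2 = 0" using B_nondeg B_sym by metis
  then show False using assms tK by auto
qed

lemma fiber2:
  assumes i1: "\<not> (\<exists>t\<in>K. w1 = sc t w2)" and i2: "\<not> (\<exists>t\<in>K. w2 = sc t w1)"
    and c: "c1 \<in> K" "c2 \<in> K"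
  shows "card {v. B v w1 = c1 \<and> B v w2 = c2} * q^2 = card (UNIV :: 'v set)"
proof -
  have nz: "w1 \<noteq> 0" "w2 \<noteq> 0" using i1 i2 K0 by force+
  obtain v1 where v1: "B v1 w1 = 1" "B v1 w2 = 0" using exists_10[OF i1 nz(2)] by blast
  obtain v2 where v2: "B v2 w2 = 1" "B v2 w1 = 0" using exists_10[OF i2 nz(1)] by blast
  have eq: "card {v. (B v w1, B v w2) = t} = card {v. B v w1 = 0 \<and> B v w2 = 0}" if "t \<in> K \<times> K" for t
  proof -
    obtain a b where t0: "t = (a, b)" by (cases t)
    have t: "t = (a, b)" "a \<in> K" "b \<in> K" using that t0 by auto
    have "{v. (B v w1, B v w2) = t} = (\<lambda>v. v + (sc a v1 + sc b v2)) ` {v. B v w1 = 0 \<and> B v w2 = 0}"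
    proof (rule set_eqI, rule iffI)
      fix x assume "x \<in> {v. (B v w1, B v w2) = t}"
      then have "x - (sc a v1 + sc b v2) \<in> {v. B v w1 = 0 \<and> B v w2 = 0}"
        using t v1 v2 by (simp add: B_diff B_add B_sc)
      then show "x \<in> (\<lambda>v. v + (sc a v1 + sc b v2)) ` {v. B v w1 = 0 \<and> B v w2 = 0}" by force
    next
      fix x assume "x \<in> (\<lambda>v. v + (sc a v1 + sc b v2)) ` {v. B v w1 = 0 \<and> B v w2 = 0}"
      then show "x \<in> {v. (B v w1, B v w2) = t}" using t v1 v2 by (auto simp: B_add B_sc)
    qed
    moreover have "inj (\<lambda>v. v + (sc a v1 + sc b v2))" by (simp add: inj_def)
    ultimately show ?thesis by (simp add: card_image inj_on_subset)
  qed
  have "card (UNIV :: 'v set) = (\<Sum>t\<in>K \<times> K. card {v. (B v w1, B v w2) = t})"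
    by (rule card_UNIV_group) (use finK B_K in auto)
  also have "\<dots> = (\<Sum>t\<in>K \<times> K. card {v. B v w1 = 0 \<and> B v w2 = 0})"
    by (rule sum.cong) (use eq in auto)
  also have "\<dots> = q^2 * card {v. B v w1 = 0 \<and> B v w2 = 0}"
    using cardK finK by (simp add: card_cartesian_product power2_eq_square)
  finally show ?thesis using eq[of "(c1, c2)"] c by simp
qed

definition tr :: "('v \<Rightarrow> real) \<Rightarrow> 'v \<Rightarrow> real" where
  "tr f w = (\<Sum>v\<in>UNIV. f v * of_bool (B v w = 0))"

definition conv :: "('v \<Rightarrow> real) \<Rightarrow> ('v \<Rightarrow> real) \<Rightarrow> 'v \<Rightarrow> real" where
  "conv f g u = (\<Sum>v\<in>UNIV. f v * g (u - v))"

definition invar :: "('v \<Rightarrow> real) \<Rightarrow> bool" where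
  "invar f \<longleftrightarrow> (\<forall>a\<in>K-{0}. \<forall>v. f (sc a v) = f v)"

definition Fc :: "('v \<Rightarrow> real) \<Rightarrow> 'v \<Rightarrow> 'a \<Rightarrow> real" where
  "Fc f w c = (\<Sum>v\<in>UNIV. f v * of_bool (B v w = c))"

lemma Fc_invar:
  assumes "invar f" "c \<in> K - {0}"
  shows "Fc f w c = Fc f w 1"
proof -
  have c: "c \<noteq> 0" "inverse c \<in> K" "c \<in> K" using assms Kinv by auto
  show ?thesis unfolding Fc_def
  proof (rule sum.reindex_bij_witness[of _ "sc c" "sc (inverse c)"])
    fix v
    have "f (sc (inverse c) v) = f v" using assms c unfolding invar_def by auto
    moreover have "(B (sc (inverse c) v) w = 1) = (B v w = c)" using c by (auto simp: B_sc field_simps)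
    ultimately show "f (sc (inverse c) v) * of_bool (B (sc (inverse c) v) w = 1) = f v * of_bool (B v w = c)"
      by simp
  qed (use c sc_inv_cancel sc_inv_cancel2 in auto)
qed

lemma Fc_sum: "(\<Sum>c\<in>K. Fc f w c) = sum f UNIV"
proof -
  have "(\<Sum>c\<in>K. Fc f w c) = (\<Sum>c\<in>K. \<Sum>v\<in>{x. x \<in> UNIV \<and> B x w = c}. f v)"
    unfolding Fc_def by (rule sum.cong) (auto intro: sum.mono_neutral_cong_right)
  also have "\<dots> = sum f UNIV"
    using sum.group[of "UNIV :: 'v set" K "\<lambda>v. B v w" f] finK B_K by (auto simp: image_subset_iff)
  finally show ?thesis .
qed

lemma Fc_one:
  assumes "invar f"
  shows "Fc f w 1 * (real q - 1) = sum f UNIV - Fc f w 0"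
proof -
  have "sum f UNIV = (\<Sum>c\<in>K. Fc f w c)" by (simp add: Fc_sum)
  also have "\<dots> = Fc f w 0 + (\<Sum>c\<in>K-{0}. Fc f w c)"
    using finK K0 by (simp add: sum.remove)
  also have "(\<Sum>c\<in>K-{0}. Fc f w c) = (\<Sum>c\<in>K-{0}. Fc f w 1)"
    by (rule sum.cong) (use Fc_invar assms in auto)
  also have "\<dots> = (real q - 1) * Fc f w 1" using finK K0 cardK q2 by (simp add: card_Diff_singleton of_nat_diff)
  finally show ?thesis by simp
qed

lemma tr_Fc: "tr f w = Fc f w 0" by (simp add: tr_def Fc_def)

lemma tr_zero: "tr f 0 = sum f UNIV" by (simp add: tr_def)

lemma aux_div: "(Q::real) \<noteq> 0 \<Longrightarrow> Q * (a / Q * (b / Q)) = a * b / Q"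
  by (simp add: field_simps power2_eq_square)

lemma conv_tr:
  assumes f: "invar f" and g: "invar g"
  shows "tr (conv f g) w = tr f w * tr g w
     + (sum f UNIV - tr f w) * (sum g UNIV - tr g w) / (real q - 1)"
proof -
  define G where "G c = Fc g w c" for c
  have "tr (conv f g) w = (\<Sum>u\<in>UNIV. \<Sum>v\<in>UNIV. f v * g (u - v) * of_bool (B u w = 0))"
    by (simp add: tr_def conv_def sum_distrib_right)
  also have "\<dots> = (\<Sum>v\<in>UNIV. \<Sum>u\<in>UNIV. f v * g (u - v) * of_bool (B u w = 0))"
    by (rule sum.swap)
  also have "\<dots> = (\<Sum>v\<in>UNIV. f v * G (- B v w))"
  proof (rule sum.cong[OF refl])
    fix v
    have "(\<Sum>u\<in>UNIV. f v * g (u - v) * of_bool (B u w = 0))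
        = (\<Sum>u\<in>UNIV. f v * (g u * of_bool (B u w = - B v w)))"
    proof (rule sum.reindex_bij_witness[of _ "\<lambda>u. u + v" "\<lambda>u. u - v"])
      fix u
      have "(B (u - v) w = - B v w) = (B u w = 0)" by (auto simp: B_diff)
      then show "f v * (g (u - v) * of_bool (B (u - v) w = - B v w)) = f v * g (u - v) * of_bool (B u w = 0)"
        by simp
    qed auto
    also have "\<dots> = f v * G (- B v w)" by (simp only: G_def Fc_def sum_distrib_left)
    finally show "(\<Sum>u\<in>UNIV. f v * g (u - v) * of_bool (B u w = 0)) = f v * G (- B v w)" .
  qed
  also have "\<dots> = (\<Sum>c\<in>K. \<Sum>v\<in>{x. x \<in> UNIV \<and> B x w = c}. f v * G (- B v w))"
    using sum.group[of "UNIV :: 'v set" K "\<lambda>v. B v w" "\<lambda>v. f v * G (- B v w)"] finK B_K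
    by (auto simp: image_subset_iff)
  also have "\<dots> = (\<Sum>c\<in>K. Fc f w c * G (- c))"
  proof (rule sum.cong[OF refl])
    fix c
    have "(\<Sum>v\<in>{x. x \<in> UNIV \<and> B x w = c}. f v * G (- B v w)) = (\<Sum>v\<in>{x. x \<in> UNIV \<and> B x w = c}. f v * G (- c))"
      by (rule sum.cong) auto
    also have "\<dots> = Fc f w c * G (- c)"
      unfolding Fc_def sum_distrib_right
      by (rule sum.mono_neutral_cong_left) auto
    finally show "(\<Sum>v\<in>{x. x \<in> UNIV \<and> B x w = c}. f v * G (- B v w)) = Fc f w c * G (- c)" .
  qed
  also have "\<dots> = Fc f w 0 * G 0 + (\<Sum>c\<in>K-{0}. Fc f w c * G (- c))"
    using finK K0 by (simp add: sum.remove)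
  also have "(\<Sum>c\<in>K-{0}. Fc f w c * G (- c)) = (\<Sum>c\<in>K-{0}. Fc f w 1 * Fc g w 1)"
  proof (rule sum.cong[OF refl])
    fix c assume "c \<in> K - {0}"
    then have "- c \<in> K - {0}" using Kneg by auto
    then show "Fc f w c * G (- c) = Fc f w 1 * Fc g w 1"
      using Fc_invar[OF f \<open>c \<in> K - {0}\<close>] Fc_invar[OF g] by (simp add: G_def)
  qed
  also have "\<dots> = (real q - 1) * (Fc f w 1 * Fc g w 1)"
    using finK K0 cardK q2 by (simp add: card_Diff_singleton of_nat_diff)
  finally have eq: "tr (conv f g) w = Fc f w 0 * Fc g w 0 + (real q - 1) * (Fc f w 1 * Fc g w 1)"
    by (simp add: G_def)
  have q1: "real q - 1 > 0" using q2 by simp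
  have A: "Fc f w 1 = (sum f UNIV - Fc f w 0) / (real q - 1)" using Fc_one[OF f, of w] q1
    by (simp add: field_simps)
  have A2: "Fc g w 1 = (sum g UNIV - Fc g w 0) / (real q - 1)" using Fc_one[OF g, of w] q1
    by (simp add: field_simps)
  have "tr (conv f g) w = Fc f w 0 * Fc g w 0 + (sum f UNIV - Fc f w 0) * (sum g UNIV - Fc g w 0) / (real q - 1)"
    unfolding eq A A2 using q1 aux_div[of "real q - 1"] by simp
  then show ?thesis by (simp only: tr_Fc)
qed

lemma tr_add: "tr (\<lambda>v. f v + g v) w = tr f w + tr g w"
  by (simp add: tr_def sum.distrib distrib_right)

lemma tr_cmult: "tr (\<lambda>v. c * f v) w = c * tr f w"
  unfolding tr_def sum_distrib_left by (simp only: mult.assoc)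

lemma tr_delta: "tr (\<lambda>v. of_bool (v = 0)) w = 1"
proof -
  have "tr (\<lambda>v. of_bool (v = 0)) w = (\<Sum>v\<in>UNIV. of_bool (v = 0 \<and> B v w = 0))"
    unfolding tr_def by (rule sum.cong) auto
  also have "{x. x = 0 \<and> B x w = 0} = {0}" by auto
  then have "(\<Sum>v\<in>UNIV. of_bool (v = 0 \<and> B v w = 0)) = (1::real)" by (simp add: Int_def)
  finally show ?thesis .
qed

lemma card_pos: "card (UNIV :: 'v set) > 0" by (simp add: finite_UNIV_card_ge_0)

lemma fiber1_real: assumes "w \<noteq> 0" "c \<in> K"
  shows "real (card {v. B v w = c}) = real (card (UNIV :: 'v set)) / real q"
  using fiber1[OF assms] q2 by (simp add: field_simps flip: of_nat_mult)

lemma tr_one: "tr (\<lambda>v. 1) w = (if w = 0 then real (card (UNIV :: 'v set)) else real (card (UNIV :: 'v set)) / real q)"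
proof -
  have "tr (\<lambda>v. 1) w = real (card {v. B v w = 0})" by (simp add: tr_def Int_def)
  then show ?thesis using fiber1_real[OF _ K0] by auto
qed

lemma invar_add: "invar f \<Longrightarrow> invar g \<Longrightarrow> invar (\<lambda>v. f v + g v)"
  by (simp add: invar_def)

lemma invar_cmult: "invar f \<Longrightarrow> invar (\<lambda>v. c * f v)"
  by (simp add: invar_def)

lemma invar_const: "invar (\<lambda>v. c)"
  by (simp add: invar_def)

lemma invar_delta: "invar (\<lambda>v. of_bool (v = 0))"
  unfolding invar_def using sc_eq_0 by fastforce

lemma invar_conv:
  assumes f: "invar f" and g: "invar g"
  shows "invar (conv f g)"
  unfolding invar_def
proof (intro ballI allI)
  fix a v assume a: "a \<in> K - {0}"
  then have ai: "inverse a \<in> K - {0}" using Kinv by auto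
  show "conv f g (sc a v) = conv f g v"
    unfolding conv_def
  proof (rule sum.reindex_bij_witness[of _ "sc a" "sc (inverse a)"])
    fix x
    have "f (sc (inverse a) x) = f x" using f ai unfolding invar_def by auto
    moreover have "v - sc (inverse a) x = sc (inverse a) (sc a v - x)"
      using a by (metis add_diff_cancel diff_add_cancel sc_addr sc_inv_cancel DiffE singletonI)
    moreover have "g (sc (inverse a) (sc a v - x)) = g (sc a v - x)" using g ai unfolding invar_def by auto
    ultimately show "f (sc (inverse a) x) * g (v - sc (inverse a) x) = f x * g (sc a v - x)" by simp
  qed (use a sc_inv_cancel sc_inv_cancel2 in auto)
qed

lemma sum_tr_swap:
  "(\<Sum>w\<in>UNIV. tr f w * of_bool (B u w = 0)) = (\<Sum>v\<in>UNIV. f v * real (card {w. B v w = 0 \<and> B u w = 0}))"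
proof -
  have "(\<Sum>w\<in>UNIV. tr f w * of_bool (B u w = 0)) = (\<Sum>w\<in>UNIV. \<Sum>v\<in>UNIV. f v * of_bool (B v w = 0 \<and> B u w = 0))"
    unfolding tr_def sum_distrib_right by (rule sum.cong) (auto intro!: sum.cong)
  also have "\<dots> = (\<Sum>v\<in>UNIV. \<Sum>w\<in>UNIV. f v * of_bool (B v w = 0 \<and> B u w = 0))" by (rule sum.swap)
  also have "\<dots> = (\<Sum>v\<in>UNIV. f v * real (card {w. B v w = 0 \<and> B u w = 0}))"
    by (rule sum.cong) (auto simp: sum_distrib_left[symmetric] Int_def simp del: sum_mult_of_bool_eq)
  finally show ?thesis .
qed

lemma cnt2:
  assumes "u \<noteq> 0"
  shows "real (card {w. B v w = 0 \<and> B u w = 0}) =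
    (if \<exists>t\<in>K. v = sc t u then real (card (UNIV :: 'v set)) / real q
     else real (card (UNIV :: 'v set)) / real q ^ 2)"
proof (cases "\<exists>t\<in>K. v = sc t u")
  case True
  then obtain t where t: "t \<in> K" "v = sc t u" by blast
  have "{w. B v w = 0 \<and> B u w = 0} = {w. B w u = 0}" using t by (auto simp: B_sc B_sym[of _ u])
  then show ?thesis using True fiber1_real[OF assms K0] by simp
next
  case False
  have F2: "\<not> (\<exists>t\<in>K. u = sc t v)"
  proof
    assume "\<exists>t\<in>K. u = sc t v"
    then obtain t where t: "t \<in> K" "u = sc t v" by blast
    then have "t \<noteq> 0" using assms by auto
    then have "v = sc (inverse t) u" using t sc_inv_cancel by simp
    then show False using False Kinv t by blast
  qed
  have "{w. B v w = 0 \<and> B u w = 0} = {w. B w v = 0 \<and> B w u = 0}" by (auto simp: B_sym[of v] B_sym[of u])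
  moreover have "card {w. B w v = 0 \<and> B w u = 0} * q^2 = card (UNIV :: 'v set)"
    using fiber2[OF False F2 K0 K0] .
  ultimately show ?thesis using False q2
    by (simp add: field_simps flip: of_nat_mult of_nat_power)
qed

lemma sum_line:
  assumes "invar f" "u \<noteq> 0"
  shows "(\<Sum>v\<in>{v. \<exists>t\<in>K. v = sc t u}. f v) = f 0 + (real q - 1) * f u"
proof -
  have inj: "inj_on (\<lambda>t. sc t u) K"
  proof (rule inj_onI)
    fix a b assume "sc a u = sc b u"
    moreover have "sc a u = sc (a - b) u + sc b u" using sc_addl[of "a-b" b u] by simp
    ultimately have "sc (a - b) u = 0" by simp
    then show "a = b" using sc_eq_0[of "a-b" u] assms(2) by auto
  qed
  have "{v. \<exists>t\<in>K. v = sc t u} = (\<lambda>t. sc t u) ` K" by auto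
  then have "(\<Sum>v\<in>{v. \<exists>t\<in>K. v = sc t u}. f v) = (\<Sum>t\<in>K. f (sc t u))"
    using sum.reindex[OF inj, of f] by simp
  also have "\<dots> = f (sc 0 u) + (\<Sum>t\<in>K-{0}. f (sc t u))" using finK K0 by (simp add: sum.remove)
  also have "(\<Sum>t\<in>K-{0}. f (sc t u)) = (\<Sum>t\<in>K-{0}. f u)"
    by (rule sum.cong) (use assms(1) in \<open>auto simp: invar_def\<close>)
  also have "\<dots> = (real q - 1) * f u" using finK K0 cardK q2 by (simp add: card_Diff_singleton of_nat_diff)
  finally show ?thesis by simp
qed

lemma tr_inj:
  assumes f: "invar f" and z: "\<And>w. tr f w = 0"
  shows "f u = 0"
proof -
  define M where "M = real (card (UNIV :: 'v set))"
  have M: "M > 0" using card_pos M_def by simp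
  have qq: "real q \<ge> 2" using q2 by simp
  have S: "sum f UNIV = 0" using z[of 0] tr_zero by simp
  have "0 = (\<Sum>w\<in>UNIV. tr f w * of_bool (B 0 w = 0))" using z by simp
  also have "\<dots> = (\<Sum>v\<in>UNIV. f v * real (card {w. B v w = 0 \<and> B 0 w = 0}))" by (rule sum_tr_swap)
  also have "\<dots> = (\<Sum>v\<in>UNIV. (M / q) * f v + of_bool (v = 0) * (f v * (M - M / q)))"
  proof (rule sum.cong[OF refl])
    fix v
    show "f v * real (card {w. B v w = 0 \<and> B 0 w = 0}) = (M / q) * f v + of_bool (v = 0) * (f v * (M - M / q))"
    proof (cases "v = 0")
      case True then show ?thesis by (simp add: M_def algebra_simps)
    next
      case False then show ?thesis using fiber1_real[OF False K0]
        by (simp add: M_def B_sym[of v])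
    qed
  qed
  also have "\<dots> = (M / q) * sum f UNIV + f 0 * (M - M / q)"
    unfolding sum.distrib sum_distrib_left[symmetric] by (simp add: Int_def)
  finally have f0: "f 0 = 0" using S M qq by (simp add: field_simps)
  show ?thesis
  proof (cases "u = 0")
    case True then show ?thesis using f0 by simp
  next
    case False
    have "0 = (\<Sum>w\<in>UNIV. tr f w * of_bool (B u w = 0))" using z by simp
    also have "\<dots> = (\<Sum>v\<in>UNIV. f v * real (card {w. B v w = 0 \<and> B u w = 0}))" by (rule sum_tr_swap)
    also have "\<dots> = (\<Sum>v\<in>UNIV. (M / q^2) * f v + (M / q - M / q^2) * (of_bool (\<exists>t\<in>K. v = sc t u) * f v))"
      by (rule sum.cong[OF refl]) (simp add: cnt2[OF False] M_def algebra_simps)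
    also have "\<dots> = (M / q^2) * sum f UNIV + (M / q - M / q^2) * (\<Sum>v\<in>{v. \<exists>t\<in>K. v = sc t u}. f v)"
      unfolding sum.distrib sum_distrib_left[symmetric] by (simp add: Int_def)
    also have "\<dots> = (M / q - M / q^2) * (real q - 1) * f u"
      using S f0 sum_line[OF f False] by simp
    finally have "(M / q - M / q^2) * (real q - 1) * f u = 0" by simp
    moreover have "M / q - M / q^2 > 0" using M qq by (simp add: field_simps power2_eq_square)
    moreover have "real q - 1 \<noteq> 0" using qq by simp
    ultimately show ?thesis by (metis mult_eq_0_iff less_irrefl)
  qed
qed

end


definition Kset :: "nat \<Rightarrow> 'a::field set" where
  "Kset q = {x. x ^ q = x}"

locale mainctx =
  fixes p f q m N :: nat and \<omega> :: "'a::{field,finite}"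
  assumes prime_p: "prime p" and f1: "f \<ge> 1" and q_def: "q = p ^ f" and m2: "m \<ge> 2"
    and cardF: "card (UNIV :: 'a set) = q ^ m"
    and prim: "primitive_elem \<omega>"
    and Npos: "N > 0" and Ndvd: "N dvd q ^ m - 1"
    and FqC0: "Fq_star q \<subseteq> cyclo_C0 N \<omega>"
    and srgC: "is_srg (UNIV :: 'a set) (cayley_adj (cyclo_C0 N \<omega>))"
begin

abbreviation "n \<equiv> q ^ m"
abbreviation "K \<equiv> (Kset q :: 'a set)"
abbreviation "Tr \<equiv> (trace_rel q m :: 'a \<Rightarrow> 'a)"

lemma q2: "q \<ge> 2"
proof -
  have "p \<ge> 2" using prime_p prime_ge_2_nat by blast
  then have "p ^ 1 \<le> p ^ f" using f1 by (intro power_increasing) auto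
  then show ?thesis using \<open>p \<ge> 2\<close> q_def by simp
qed

lemma n_ge: "n \<ge> q * q"
proof -
  have "q ^ 2 \<le> q ^ m" using m2 q2 by (intro power_increasing) auto
  then show ?thesis by (simp add: power2_eq_square)
qed

lemma of_nat_card: "of_nat (card (UNIV :: 'a set)) = (0::'a)"
proof -
  have A: "(\<Sum>x\<in>UNIV. x + 1) = (\<Sum>x\<in>UNIV. (x::'a))"
    by (rule sum.reindex_bij_witness[of _ "\<lambda>x. x - 1" "\<lambda>x. x + 1"]) auto
  have B: "(\<Sum>x\<in>UNIV. x + 1) = (\<Sum>x\<in>UNIV. (x::'a)) + of_nat (card (UNIV :: 'a set))"
    by (simp add: sum.distrib)
  from A B show ?thesis by simp
qed

lemma CHAR_eq: "CHAR('a) = p"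
proof -
  have pos: "CHAR('a) > 0" by (rule finite_imp_CHAR_pos) simp
  have pr: "prime CHAR('a)" using prime_CHAR_semidom pos by blast
  have "CHAR('a) dvd card (UNIV :: 'a set)" using of_nat_card of_nat_eq_0_iff_char_dvd by blast
  then have "CHAR('a) dvd p ^ (f * m)" using cardF q_def by (simp add: power_mult)
  then have "CHAR('a) dvd p" using pr prime_dvd_power by blast
  then show ?thesis using pr prime_p primes_dvd_imp_eq by blast
qed

lemma frob: "(x + y :: 'a) ^ (q ^ i) = x ^ (q ^ i) + y ^ (q ^ i)"
  using freshmans_dream'[of "q ^ i" "f * i" x y] CHAR_eq prime_p q_def by (simp add: power_mult)

lemma frob_sum: "(sum g A :: 'a) ^ (q ^ i) = (\<Sum>a\<in>A. g a ^ (q ^ i))"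
  using freshmans_dream_sum'[of "q ^ i" "f * i" g A] CHAR_eq prime_p q_def by (simp add: power_mult)

lemma frob1: "(x + y :: 'a) ^ q = x ^ q + y ^ q"
  using frob[of x y 1] by simp

lemma pow_card: "(x::'a) ^ n = x"
proof (cases "x = 0")
  case False
  have "x * (\<Prod>y\<in>UNIV-{0}. x * y) = x * x ^ (card (UNIV :: 'a set) - 1) * \<Prod>(UNIV-{0})"
    by (simp add: prod.distrib mult_ac)
  also have "x * x ^ (card (UNIV :: 'a set) - 1) = x ^ Suc (card (UNIV :: 'a set) - 1)"
    by (subst power_Suc) auto
  also have "Suc (card (UNIV :: 'a set) - 1) = card (UNIV :: 'a set)"
    using finite_UNIV_card_ge_0[where ?'a = 'a] by simp
  also have "(\<Prod>y\<in>UNIV-{0}. x * y) = (\<Prod>y\<in>UNIV-{0}. y)"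
    by (rule prod.reindex_bij_witness[of _ "\<lambda>y. y / x" "\<lambda>y. x * y"]) (use False in auto)
  finally show ?thesis using cardF by simp
qed (use q2 in auto)

lemma K_pow: "a \<in> K \<Longrightarrow> a ^ (q ^ i) = a"
proof (induction i)
  case (Suc i)
  have "a ^ (q ^ Suc i) = (a ^ (q ^ i)) ^ q" by (simp add: power_mult[symmetric] mult.commute)
  then show ?case using Suc by (simp add: Kset_def)
qed simp

lemma K0: "0 \<in> K" using q2 by (simp add: Kset_def)
lemma K1: "1 \<in> K" by (simp add: Kset_def)
lemma Kadd: "a \<in> K \<Longrightarrow> b \<in> K \<Longrightarrow> a + b \<in> K" by (simp add: Kset_def frob1)
lemma Kmult: "a \<in> K \<Longrightarrow> b \<in> K \<Longrightarrow> a * b \<in> K" by (simp add: Kset_def power_mult_distrib)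
lemma Kneg: "a \<in> K \<Longrightarrow> - a \<in> K"
proof -
  assume a: "a \<in> K"
  have "(- a + a) ^ q = (- a) ^ q + a ^ q" by (rule frob1)
  moreover have "(- a + a) ^ q = 0" using q2 by simp
  ultimately have "(- a) ^ q = - (a ^ q)" by (simp add: eq_neg_iff_add_eq_0)
  then show ?thesis using a by (simp add: Kset_def)
qed
lemma Kinv: "a \<in> K \<Longrightarrow> inverse a \<in> K" by (simp add: Kset_def power_inverse)

lemma Tr_add: "Tr (x + y) = Tr x + Tr y"
  by (simp add: trace_rel_def frob sum.distrib)

lemma Tr_sc: "a \<in> K \<Longrightarrow> Tr (a * x) = a * Tr x"
  by (simp add: trace_rel_def power_mult_distrib K_pow sum_distrib_left)

lemma Tr_K: "Tr x \<in> K"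
proof -
  have "Tr x ^ q = (\<Sum>i<m. (x ^ (q ^ i)) ^ q)"
    using frob_sum[of "\<lambda>i. x ^ (q ^ i)" "{..<m}" 1] by (simp add: trace_rel_def)
  also have "\<dots> = (\<Sum>i<m. x ^ (q ^ Suc i))" by (simp add: power_mult[symmetric] mult.commute)
  also have "\<dots> = Tr x"
  proof -
    have "(\<Sum>i<Suc m. x ^ (q ^ i)) = x ^ q ^ 0 + (\<Sum>i<m. x ^ (q ^ Suc i))" by (rule sum.lessThan_Suc_shift)
    moreover have "(\<Sum>i<Suc m. x ^ (q ^ i)) = (\<Sum>i<m. x ^ (q ^ i)) + x ^ (q ^ m)" by simp
    ultimately show ?thesis using pow_card by (simp add: trace_rel_def)
  qed
  finally show ?thesis by (simp add: Kset_def)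
qed

lemma card_K_le: "card K \<le> q"
proof -
  define P :: "'a poly" where "P = monom 1 q + [:0, -1:]"
  have deg: "degree P = q" using q2 unfolding P_def by (subst degree_add_eq_left) (simp_all add: degree_monom_eq)
  then have "P \<noteq> 0" using q2 by auto
  moreover have "K = {x. poly P x = 0}" by (simp add: Kset_def P_def poly_monom)
  ultimately show ?thesis using card_poly_roots_bound[of P] deg by simp
qed

lemma Tr_fiber_le: "card {x. Tr x = c} \<le> q ^ (m - 1)"
proof -
  define P :: "'a poly" where "P = (\<Sum>i<m. monom 1 (q ^ i)) - [:c:]"
  have inj: "inj (\<lambda>i. q ^ i)" using q2 by (simp add: inj_def power_inject_exp)
  have "coeff P (q ^ (m - 1)) = (\<Sum>i<m. of_bool (q ^ i = q ^ (m - 1)))"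
    using q2 by (simp add: P_def coeff_sum coeff_monom coeff_pCons of_bool_def split: nat.split)
  also have "\<dots> = (\<Sum>i<m. of_bool (i = m - 1))"
    by (rule sum.cong) (use inj in \<open>auto simp: inj_eq\<close>)
  also have "{x. x = m - 1 \<and> x < m} = {m - 1}" using m2 by auto
  then have "(\<Sum>i<m. of_bool (i = m - 1)) = (1::'a)" by (simp add: Int_def)
  finally have "P \<noteq> 0" by auto
  moreover have "degree P \<le> q ^ (m - 1)"
  proof -
    have "degree (\<Sum>i<m. monom (1::'a) (q ^ i)) \<le> q ^ (m - 1)"
    proof (rule degree_sum_le)
      fix i assume "i \<in> {..<m}"
      then have "q ^ i \<le> q ^ (m - 1)" using q2 by (intro power_increasing) auto
      then show "degree (monom (1::'a) (q ^ i)) \<le> q ^ (m - 1)" using degree_monom_le order_trans by blast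
    qed simp
    then show ?thesis unfolding P_def using degree_diff_le by fastforce
  qed
  moreover have "{x. Tr x = c} = {x. poly P x = 0}"
    by (simp add: P_def trace_rel_def poly_sum poly_monom)
  ultimately show ?thesis using card_poly_roots_bound[of P] by simp
qed

lemma card_K: "card K = q"
proof -
  have "card (UNIV :: 'a set) = (\<Sum>c\<in>K. card {x. Tr x = c})"
    using sum.group[of "UNIV :: 'a set" K Tr "\<lambda>_. 1::nat"] Tr_K by (auto simp: image_subset_iff)
  also have "\<dots> \<le> (\<Sum>c\<in>K. q ^ (m - 1))" by (rule sum_mono) (rule Tr_fiber_le)
  also have "\<dots> = card K * q ^ (m - 1)" by simp
  finally have "q * q ^ (m - 1) \<le> card K * q ^ (m - 1)" using cardF m2
    by (metis Suc_diff_1 less_le_trans not_less_eq_eq numeral_2_eq_2 power_Suc zero_less_Suc)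
  then have "q \<le> card K" using q2 by simp
  then show ?thesis using card_K_le by simp
qed

lemma Tr_nonzero: "\<exists>x. Tr x \<noteq> 0"
proof (rule ccontr)
  assume "\<not> (\<exists>x. Tr x \<noteq> 0)"
  then have "{x. Tr x = 0} = UNIV" by auto
  then have "q ^ m \<le> q ^ (m - 1)" using Tr_fiber_le[of 0] cardF by simp
  moreover have "q ^ (m - 1) < q ^ m" using q2 m2 by (intro power_strict_increasing) auto
  ultimately show False by simp
qed

end


context mainctx
begin

lemma B1_nondeg: "(\<And>u. Tr (v * u) = 0) \<Longrightarrow> v = 0"
proof (rule ccontr)
  assume h: "\<And>u. Tr (v * u) = 0" and v: "v \<noteq> 0"
  obtain x where x: "Tr x \<noteq> 0" using Tr_nonzero by blast
  have "Tr (v * (x / v)) = Tr x" using v by simp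
  then show False using h x by metis
qed

lemma finK: "finite K" by simp

end

sublocale mainctx \<subseteq> F1: fq_space K q "\<lambda>a x. a * x" "\<lambda>x y. Tr (x * y)"
proof unfold_locales
  show "card K = q" by (rule card_K)
  show "2 \<le> q" by (rule q2)
  fix a b :: 'a
  show "a \<in> K \<Longrightarrow> b \<in> K \<Longrightarrow> a + b \<in> K" by (rule Kadd)
  show "a \<in> K \<Longrightarrow> b \<in> K \<Longrightarrow> a * b \<in> K" by (rule Kmult)
  show "a \<in> K \<Longrightarrow> - a \<in> K" by (rule Kneg)
  show "a \<in> K \<Longrightarrow> inverse a \<in> K" by (rule Kinv)
  fix v w u :: 'a
  show "(a + b) * v = a * v + b * v" by (simp add: distrib_right)
  show "a * (v + w) = a * v + a * w" by (simp add: distrib_left)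
  show "a * (b * v) = a * b * v" by simp
  show "1 * v = v" by simp
  show "Tr ((v + w) * u) = Tr (v * u) + Tr (w * u)" by (simp add: distrib_right Tr_add)
  show "a \<in> K \<Longrightarrow> Tr (a * v * u) = a * Tr (v * u)" by (simp add: Tr_sc mult.assoc)
  show "Tr (v * u) = Tr (u * v)" by (simp add: mult.commute)
  show "Tr (v * u) \<in> K" by (rule Tr_K)
  show "(\<And>u. Tr (v * u) = 0) \<Longrightarrow> v = 0" by (rule B1_nondeg)
qed (auto simp: K0 K1)

sublocale mainctx \<subseteq> F2: fq_space K q "\<lambda>a (y, z). (a * y, a * z)" "\<lambda>(y, z) (\<alpha>, \<beta>). Tr (y * \<alpha> + z * \<beta>)"
proof unfold_locales
  show "card K = q" by (rule card_K)
  show "2 \<le> q" by (rule q2)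
  fix a b :: 'a
  show "a \<in> K \<Longrightarrow> b \<in> K \<Longrightarrow> a + b \<in> K" by (rule Kadd)
  show "a \<in> K \<Longrightarrow> b \<in> K \<Longrightarrow> a * b \<in> K" by (rule Kmult)
  show "a \<in> K \<Longrightarrow> - a \<in> K" by (rule Kneg)
  show "a \<in> K \<Longrightarrow> inverse a \<in> K" by (rule Kinv)
  fix v w u :: "'a \<times> 'a"
  show "(case v of (y, z) \<Rightarrow> ((a + b) * y, (a + b) * z)) =
        (case v of (y, z) \<Rightarrow> (a * y, a * z)) + (case v of (y, z) \<Rightarrow> (b * y, b * z))"
    by (cases v) (simp add: distrib_right)
  show "(case v + w of (y, z) \<Rightarrow> (a * y, a * z)) =
        (case v of (y, z) \<Rightarrow> (a * y, a * z)) + (case w of (y, z) \<Rightarrow> (a * y, a * z))"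
    by (cases v; cases w) (simp add: distrib_left)
  show "(case case v of (y, z) \<Rightarrow> (b * y, b * z) of (y, z) \<Rightarrow> (a * y, a * z)) =
        (case v of (y, z) \<Rightarrow> (a * b * y, a * b * z))"
    by (cases v) simp
  show "(case v of (y, z) \<Rightarrow> (1 * y, 1 * z)) = v" by (cases v) simp
  show "(case v + w of (y, z) \<Rightarrow> \<lambda>(\<alpha>, \<beta>). Tr (y * \<alpha> + z * \<beta>)) u =
        (case v of (y, z) \<Rightarrow> \<lambda>(\<alpha>, \<beta>). Tr (y * \<alpha> + z * \<beta>)) u + (case w of (y, z) \<Rightarrow> \<lambda>(\<alpha>, \<beta>). Tr (y * \<alpha> + z * \<beta>)) u"
    by (cases v; cases w; cases u) (simp add: distrib_right Tr_add algebra_simps)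
  show "a \<in> K \<Longrightarrow> (case case v of (y, z) \<Rightarrow> (a * y, a * z) of (y, z) \<Rightarrow> \<lambda>(\<alpha>, \<beta>). Tr (y * \<alpha> + z * \<beta>)) u =
        a * (case v of (y, z) \<Rightarrow> \<lambda>(\<alpha>, \<beta>). Tr (y * \<alpha> + z * \<beta>)) u"
    by (cases v; cases u) (simp add: Tr_sc mult.assoc flip: distrib_left)
  show "(case v of (y, z) \<Rightarrow> \<lambda>(\<alpha>, \<beta>). Tr (y * \<alpha> + z * \<beta>)) u = (case u of (y, z) \<Rightarrow> \<lambda>(\<alpha>, \<beta>). Tr (y * \<alpha> + z * \<beta>)) v"
    by (cases v; cases u) (simp add: mult.commute)
  show "(case v of (y, z) \<Rightarrow> \<lambda>(\<alpha>, \<beta>). Tr (y * \<alpha> + z * \<beta>)) u \<in> K"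
    by (cases v; cases u) (simp add: Tr_K)
  show "(\<And>u. (case v of (y, z) \<Rightarrow> \<lambda>(\<alpha>, \<beta>). Tr (y * \<alpha> + z * \<beta>)) u = 0) \<Longrightarrow> v = 0"
  proof -
    assume h: "\<And>u. (case v of (y, z) \<Rightarrow> \<lambda>(\<alpha>, \<beta>). Tr (y * \<alpha> + z * \<beta>)) u = 0"
    obtain y z where v: "v = (y, z)" by (cases v)
    have "Tr (y * \<alpha>) = 0" for \<alpha> using h[of "(\<alpha>, 0)"] v by simp
    then have "y = 0" by (rule B1_nondeg)
    moreover have "Tr (z * \<beta>) = 0" for \<beta> using h[of "(0, \<beta>)"] v by simp
    then have "z = 0" by (rule B1_nondeg)
    ultimately show "v = 0" using v by (simp add: zero_prod_def)
  qed
qed (auto simp: K0 K1)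


context mainctx
begin

abbreviation "C0 \<equiv> cyclo_C0 N \<omega>"

lemma n_gt: "n > 3"
proof -
  have "2 * 2 \<le> q * q" using q2 by (intro mult_le_mono) auto
  then show ?thesis using n_ge by linarith
qed

lemma omega_nz: "\<omega> \<noteq> 0"
proof
  assume w: "\<omega> = 0"
  have "card ({0, 1} :: 'a set) \<le> 2" by (simp add: card_insert_le_m1)
  have "UNIV \<noteq> ({0, 1} :: 'a set)"
  proof
    assume "UNIV = ({0, 1} :: 'a set)"
    then have "n \<le> 2" using cardF \<open>card ({0, 1} :: 'a set) \<le> 2\<close> by simp
    then show False using n_gt by simp
  qed
  then obtain x :: 'a where x: "x \<noteq> 0" "x \<noteq> 1" by auto
  then obtain k where "x = \<omega> ^ k" using prim unfolding primitive_elem_def by blast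
  then show False using x w by (cases k) auto
qed

lemma omega_e: "\<omega> ^ (n - 1) = 1"
proof -
  have "n = Suc (n - 1)" using n_gt by simp
  then have "\<omega> ^ (n - 1) * \<omega> = \<omega> ^ n" by (metis power_Suc2)
  then have "\<omega> ^ (n - 1) * \<omega> = 1 * \<omega>" using pow_card by simp
  then show ?thesis using omega_nz by (metis mult_right_cancel)
qed

lemma pow_mod_gen: "\<omega> ^ j = 1 \<Longrightarrow> \<omega> ^ a = \<omega> ^ (a mod j)"
proof -
  assume j: "\<omega> ^ j = 1"
  have "\<omega> ^ a = \<omega> ^ (j * (a div j) + a mod j)" by simp
  also have "\<dots> = (\<omega> ^ j) ^ (a div j) * \<omega> ^ (a mod j)" by (simp only: power_add power_mult)
  finally show ?thesis using j by simp
qed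

lemma omega_one: assumes "\<omega> ^ a = 1" shows "(n - 1) dvd a"
proof (rule ccontr)
  assume nd: "\<not> (n - 1) dvd a"
  define j where "j = a mod (n - 1)"
  have j0: "j > 0" "j < n - 1" using nd n_gt by (auto simp: j_def dvd_eq_mod_eq_0)
  have jj: "\<omega> ^ j = 1" using assms pow_mod_gen[OF omega_e, of a] j_def by simp
  have "UNIV - {0} \<subseteq> (\<lambda>k. \<omega> ^ k) ` {..<j}"
  proof
    fix x :: 'a assume "x \<in> UNIV - {0}"
    then obtain k where "x = \<omega> ^ k" using prim unfolding primitive_elem_def by blast
    then have "x = \<omega> ^ (k mod j)" using pow_mod_gen[OF jj] by simp
    then show "x \<in> (\<lambda>k. \<omega> ^ k) ` {..<j}" using j0 by auto
  qed
  then have "card (UNIV - {0 :: 'a}) \<le> card ((\<lambda>k. \<omega> ^ k) ` {..<j})" by (intro card_mono) auto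
  also have "\<dots> \<le> j" using card_image_le[of "{..<j}" "\<lambda>k. \<omega> ^ k"] by simp
  finally show False using j0 cardF by (simp add: card_Diff_singleton)
qed

lemma omega_inj: assumes "\<omega> ^ a = \<omega> ^ b" shows "a mod (n - 1) = b mod (n - 1)"
proof -
  have *: "a' = b'" if "\<omega> ^ a' = \<omega> ^ b'" "a' < n - 1" "b' < n - 1" "a' \<le> b'" for a' b'
  proof -
    have "a' + (b' - a') = b'" using that by simp
    then have "\<omega> ^ b' = \<omega> ^ a' * \<omega> ^ (b' - a')" by (metis power_add)
    then have "\<omega> ^ (b' - a') = 1" using that omega_nz by simp
    then have "(n - 1) dvd (b' - a')" by (rule omega_one)
    moreover have "b' - a' < n - 1" using that by linarith
    ultimately have "b' - a' = 0" by (cases "b' - a' = 0") (auto dest: dvd_imp_le)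
    then show ?thesis using that by simp
  qed
  have e: "\<omega> ^ (a mod (n - 1)) = \<omega> ^ (b mod (n - 1))"
    using assms pow_mod_gen[OF omega_e] by metis
  have lt: "a mod (n - 1) < n - 1" "b mod (n - 1) < n - 1" using n_gt by auto
  show ?thesis
  proof (cases "a mod (n - 1) \<le> b mod (n - 1)")
    case True then show ?thesis using * e lt by blast
  next
    case False then show ?thesis using *[of "b mod (n - 1)" "a mod (n - 1)"] e lt by auto
  qed
qed

lemma C0_iff: "x \<in> C0 \<longleftrightarrow> (\<exists>k. x = \<omega> ^ (N * k))"
  by (simp add: cyclo_C0_def)

lemma C0_1: "1 \<in> C0" unfolding C0_iff by (rule exI[of _ 0]) simp

lemma C0_mult: "x \<in> C0 \<Longrightarrow> y \<in> C0 \<Longrightarrow> x * y \<in> C0"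
proof -
  assume "x \<in> C0" "y \<in> C0"
  then obtain a b where "x = \<omega> ^ (N * a)" "y = \<omega> ^ (N * b)" unfolding C0_iff by blast
  then have "x * y = \<omega> ^ (N * (a + b))" by (simp add: power_add distrib_left)
  then show ?thesis unfolding C0_iff by blast
qed

lemma C0_pow: "x \<in> C0 \<Longrightarrow> x ^ j \<in> C0"
  by (induction j) (auto simp: C0_1 C0_mult)

lemma C0_nz: "x \<in> C0 \<Longrightarrow> x \<noteq> 0"
  unfolding C0_iff using omega_nz by auto

lemma C0_e: "x \<in> C0 \<Longrightarrow> x ^ (n - 1) = 1"
proof -
  assume "x \<in> C0"
  then obtain a where "x = \<omega> ^ (N * a)" unfolding C0_iff by blast
  then have "x ^ (n - 1) = (\<omega> ^ (n - 1)) ^ (N * a)" by (simp add: power_mult[symmetric] mult.commute)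
  then show ?thesis using omega_e by simp
qed

lemma C0_inv: assumes "x \<in> C0" shows "inverse x \<in> C0"
proof -
  have "n - 1 = Suc (n - 2)" using n_gt by simp
  then have "x * x ^ (n - 2) = x ^ (n - 1)" by simp
  then have "x * x ^ (n - 2) = 1" using C0_e assms by simp
  then have "inverse x = x ^ (n - 2)" using C0_nz assms by (metis inverse_unique)
  then show ?thesis using C0_pow assms by simp
qed

lemma K_C0: "a \<in> K \<Longrightarrow> a \<noteq> 0 \<Longrightarrow> a \<in> C0"
  using FqC0 unfolding Fq_star_def Kset_def by auto

lemma C0_neg: "x \<in> C0 \<Longrightarrow> - x \<in> C0"
proof -
  assume x: "x \<in> C0"
  have "-1 \<in> C0" using K_C0 Kneg[OF K1] by simp
  then show ?thesis using C0_mult[OF _ x] by fastforce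
qed

lemma C0_mult_iff: assumes c: "c \<in> C0" shows "(c * x \<in> C0) = (x \<in> C0)"
proof
  assume "c * x \<in> C0"
  then have "inverse c * (c * x) \<in> C0" using C0_inv[OF c] C0_mult by blast
  then show "x \<in> C0" using C0_nz[OF c] by (simp add: mult.assoc[symmetric])
qed (use c C0_mult in blast)

lemma C0_decomp: assumes "a \<noteq> 0" shows "\<exists>j<N. \<exists>c\<in>C0. a = \<omega> ^ j * c"
proof -
  obtain k where k: "a = \<omega> ^ k" using prim assms unfolding primitive_elem_def by blast
  have "\<omega> ^ k = \<omega> ^ (k mod N) * \<omega> ^ (N * (k div N))" by (simp add: power_add[symmetric])
  moreover have "\<omega> ^ (N * (k div N)) \<in> C0" using C0_iff by blast
  moreover have "k mod N < N" using Npos by simp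
  ultimately show ?thesis using k by blast
qed

lemma C0_coset_unique:
  assumes "i < N" "j < N" "c \<in> C0" "c' \<in> C0" "\<omega> ^ i * c = \<omega> ^ j * c'"
  shows "i = j"
proof -
  obtain a b where ab: "c = \<omega> ^ (N * a)" "c' = \<omega> ^ (N * b)" using assms C0_iff by blast
  have "\<omega> ^ (i + N * a) = \<omega> ^ (j + N * b)" using assms ab by (simp add: power_add)
  then have "(i + N * a) mod (n - 1) = (j + N * b) mod (n - 1)" by (rule omega_inj)
  then have "(i + N * a) mod (n - 1) mod N = (j + N * b) mod (n - 1) mod N" by simp
  then have "(i + N * a) mod N = (j + N * b) mod N" using Ndvd by (simp add: mod_mod_cancel)
  then show ?thesis using assms by simp
qed

lemma card_C0: "card C0 * N = n - 1"
proof -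
  obtain t where t: "n - 1 = N * t" using Ndvd by (auto elim: dvdE)
  have "C0 = (\<lambda>k. \<omega> ^ (N * k)) ` {..<t}"
  proof (rule set_eqI, rule iffI)
    fix x assume "x \<in> C0"
    then obtain k where k: "x = \<omega> ^ (N * k)" using C0_iff by blast
    have "x = \<omega> ^ ((N * k) mod (n - 1))" using k pow_mod_gen[OF omega_e] by simp
    also have "(N * k) mod (n - 1) = N * (k mod t)" using t by simp
    finally have "x = \<omega> ^ (N * (k mod t))" .
    moreover have "t > 0" using t n_gt by (cases t) auto
    then have "k mod t < t" by simp
    ultimately show "x \<in> (\<lambda>k. \<omega> ^ (N * k)) ` {..<t}" by auto
  qed (auto simp: C0_iff)
  moreover have "inj_on (\<lambda>k. \<omega> ^ (N * k)) {..<t}"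
  proof (rule inj_onI)
    fix a b assume ab: "a \<in> {..<t}" "b \<in> {..<t}" "\<omega> ^ (N * a) = \<omega> ^ (N * b)"
    then have "(N * a) mod (n - 1) = (N * b) mod (n - 1)" using omega_inj by blast
    moreover have "N * a < n - 1" "N * b < n - 1" using ab t Npos by auto
    ultimately show "a = b" using Npos by simp
  qed
  ultimately have "card C0 = t" by (simp add: card_image)
  then show ?thesis using t by simp
qed

end


context mainctx
begin

definition hh :: "'a \<Rightarrow> nat" where
  "hh a = card {x \<in> C0. Tr (x * a) = 0}"

definition ind0 :: "'a \<Rightarrow> real" where
  "ind0 x = of_bool (x \<in> C0)"

abbreviation "k0 \<equiv> card C0"

lemma Kstar_card: "card (K - {0}) = q - 1"
  using card_K K0 by (simp add: card_Diff_singleton)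

lemma orbit_dvd:
  "finite S \<Longrightarrow> 0 \<notin> S \<Longrightarrow> (\<And>l x. l \<in> K - {0} \<Longrightarrow> x \<in> S \<Longrightarrow> l * x \<in> S) \<Longrightarrow> (q - 1) dvd card S"
proof (induction "card S" arbitrary: S rule: less_induct)
  case less
  show ?case
  proof (cases "S = {}")
    case True then show ?thesis by simp
  next
    case False
    then obtain x where x: "x \<in> S" by auto
    have x0: "x \<noteq> 0" using x less.prems by auto
    define Orb where "Orb = (\<lambda>l. l * x) ` (K - {0})"
    have OS: "Orb \<subseteq> S" using less.prems x by (auto simp: Orb_def)
    have "inj_on (\<lambda>l. l * x) (K - {0})" using x0 by (auto simp: inj_on_def)
    then have cO: "card Orb = q - 1" using Kstar_card by (simp add: Orb_def card_image)
    define S' where "S' = S - Orb"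
    have fin: "finite S'" using less.prems by (simp add: S'_def)
    have cl: "l * y \<in> S'" if "l \<in> K - {0}" "y \<in> S'" for l y
    proof -
      have "l * y \<in> S" using less.prems that by (auto simp: S'_def)
      moreover have "l * y \<notin> Orb"
      proof
        assume "l * y \<in> Orb"
        then obtain \<mu> where mu: "\<mu> \<in> K - {0}" "l * y = \<mu> * x" by (auto simp: Orb_def)
        then have "y = (\<mu> / l) * x" using that by (simp add: field_simps)
        moreover have "\<mu> / l \<in> K - {0}" using mu that Kmult Kinv by (auto simp: divide_inverse)
        ultimately have "y \<in> Orb" unfolding Orb_def by (rule image_eqI)
        then show False using that by (simp add: S'_def)
      qed
      ultimately show ?thesis by (simp add: S'_def)
    qed
    have cS: "card S = card S' + (q - 1)"
      using OS cO less.prems card_Diff_subset[of Orb S] card_mono[of S Orb]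
      by (simp add: S'_def finite_subset)
    have "q - 1 > 0" using q2 by simp
    then have "card S' < card S" using cS by simp
    then have "(q - 1) dvd card S'" using less.hyps fin less.prems(2) cl by (auto simp: S'_def)
    then show ?thesis using cS by simp
  qed
qed

lemma hh_dvd: "(q - 1) dvd hh a"
  unfolding hh_def
proof (rule orbit_dvd)
  show "0 \<notin> {x \<in> C0. Tr (x * a) = 0}" using C0_nz by auto
  fix l x assume l: "l \<in> K - {0}" and x: "x \<in> {x \<in> C0. Tr (x * a) = 0}"
  have "l \<in> C0" using l K_C0 by auto
  then have "l * x \<in> C0" using x C0_mult by auto
  moreover have "Tr (l * x * a) = 0" using x l Tr_sc[of l "x * a"] by (auto simp: mult.assoc)
  ultimately show "l * x \<in> {x \<in> C0. Tr (x * a) = 0}" by simp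
qed simp

lemma hh_C0: assumes c: "c \<in> C0" shows "hh (c * a) = hh a"
proof -
  have c0: "c \<noteq> 0" using c C0_nz by auto
  have "{x \<in> C0. Tr (x * a) = 0} = (\<lambda>x. c * x) ` {x \<in> C0. Tr (x * (c * a)) = 0}"
  proof (rule set_eqI, rule iffI)
    fix y assume y: "y \<in> {x \<in> C0. Tr (x * a) = 0}"
    have "inverse c * y \<in> C0" using y c C0_inv C0_mult by auto
    moreover have "Tr (inverse c * y * (c * a)) = 0" using y c0 by (simp add: field_simps)
    moreover have "y = c * (inverse c * y)" using c0 by simp
    ultimately show "y \<in> (\<lambda>x. c * x) ` {x \<in> C0. Tr (x * (c * a)) = 0}" by blast
  next
    fix y assume "y \<in> (\<lambda>x. c * x) ` {x \<in> C0. Tr (x * (c * a)) = 0}"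
    then obtain x where "x \<in> C0" "Tr (x * (c * a)) = 0" "y = c * x" by auto
    then show "y \<in> {x \<in> C0. Tr (x * a) = 0}" using c C0_mult by (auto simp: mult_ac)
  qed
  moreover have "inj_on (\<lambda>x. c * x) {x \<in> C0. Tr (x * (c * a)) = 0}" using c0 by (auto simp: inj_on_def)
  ultimately show ?thesis unfolding hh_def by (simp add: card_image)
qed

lemma of_bool_conj: "of_bool P * of_bool Q = (of_bool (P \<and> Q) :: real)" by simp

lemma tr_ind0: "F1.tr ind0 a = real (hh a)"
proof -
  have "F1.tr ind0 a = (\<Sum>v\<in>UNIV. of_bool (v \<in> C0 \<and> Tr (v * a) = 0))"
    unfolding F1.tr_def ind0_def by (rule sum.cong) auto
  also have "\<dots> = real (hh a)" by (simp add: hh_def Int_def)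
  finally show ?thesis .
qed

lemma sum_ind0: "sum ind0 UNIV = real k0"
  by (simp add: ind0_def Int_def)

lemma invar_ind0: "F1.invar ind0"
  unfolding F1.invar_def ind0_def using K_C0 C0_mult_iff by auto

lemma tr_lin3: "F1.tr (\<lambda>v. a * f1 v + b * f2 v + c * f3 v) w = a * F1.tr f1 w + b * F1.tr f2 w + c * F1.tr f3 w"
  unfolding F1.tr_def by (simp only: sum_distrib_left distrib_right sum.distrib mult.assoc)

lemma srg_data: obtains l0 u0 :: int where
  "\<And>x y. x \<noteq> y \<Longrightarrow> x - y \<in> C0 \<Longrightarrow> int (card {z. x - z \<in> C0 \<and> y - z \<in> C0}) = l0"
  "\<And>x y. x \<noteq> y \<Longrightarrow> x - y \<notin> C0 \<Longrightarrow> int (card {z. x - z \<in> C0 \<and> y - z \<in> C0}) = u0"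
  "\<exists>x y. x \<noteq> y \<and> x - y \<notin> C0"
proof -
  obtain v0 k l0 u0 where s: "srg (UNIV :: 'a set) (cayley_adj C0) v0 k l0 u0"
    using srgC unfolding is_srg_def by blast
  show ?thesis
    by (rule that[of l0 u0]) (use s in \<open>auto simp: srg_def cayley_adj_def\<close>)
qed

lemma conv_ind0: "F1.conv ind0 ind0 u = real (card {v. v \<in> C0 \<and> u - v \<in> C0})"
proof -
  have "F1.conv ind0 ind0 u = (\<Sum>v\<in>UNIV. of_bool (v \<in> C0 \<and> u - v \<in> C0))"
    unfolding F1.conv_def ind0_def by (rule sum.cong) auto
  then show ?thesis by (simp add: Int_def)
qed

lemma common_nb: "card {v. v \<in> C0 \<and> u - v \<in> C0} = card {z. u - z \<in> C0 \<and> 0 - z \<in> C0}"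
proof -
  have "{z. u - z \<in> C0 \<and> 0 - z \<in> C0} = (\<lambda>v. u - v) ` {v. v \<in> C0 \<and> u - v \<in> C0}"
  proof (rule set_eqI, rule iffI)
    fix z assume z: "z \<in> {z. u - z \<in> C0 \<and> 0 - z \<in> C0}"
    have "u - z \<in> C0 \<and> u - (u - z) \<in> C0" using z C0_neg[of "0 - z"] by auto
    then show "z \<in> (\<lambda>v. u - v) ` {v. v \<in> C0 \<and> u - v \<in> C0}" by force
  next
    fix z assume "z \<in> (\<lambda>v. u - v) ` {v. v \<in> C0 \<and> u - v \<in> C0}"
    then obtain v where "v \<in> C0" "u - v \<in> C0" "z = u - v" by auto
    then show "z \<in> {z. u - z \<in> C0 \<and> 0 - z \<in> C0}" using C0_neg[of "u - v"] by auto
  qed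
  moreover have "inj (\<lambda>v. u - v)" by (auto simp: inj_def)
  ultimately show ?thesis by (simp add: card_image inj_on_subset)
qed

end


lemma quad_two:
  fixes Q k L U x y z :: real
  assumes Q: "Q > 0"
    and ex: "x^2 + (k - x)^2 / Q = k + L * x + U"
    and ey: "y^2 + (k - y)^2 / Q = k + L * y + U"
    and ez: "z^2 + (k - z)^2 / Q = k + L * z + U"
    and xy: "x \<noteq> y"
  shows "z = x \<or> z = y"
proof -
  have P: "(Q + 1) * t^2 - (2 * k + Q * L) * t + (k^2 - Q * (k + U)) = 0"
    if "t^2 + (k - t)^2 / Q = k + L * t + U" for t
  proof -
    have "Q * (t^2 + (k - t)^2 / Q) = Q * (k + L * t + U)" using that by simp
    then have "Q * t^2 + (k - t)^2 = Q * (k + L * t + U)" using Q by (simp add: distrib_left)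
    then show ?thesis by (simp add: power2_eq_square algebra_simps)
  qed
  have D: "(s - t) * ((Q + 1) * (s + t) - (2 * k + Q * L)) =
      ((Q + 1) * s^2 - (2 * k + Q * L) * s + (k^2 - Q * (k + U))) -
      ((Q + 1) * t^2 - (2 * k + Q * L) * t + (k^2 - Q * (k + U)))" for s t
    by (simp add: power2_eq_square algebra_simps)
  have Px: "(Q + 1) * (x + y) = 2 * k + Q * L"
    using D[of x y] P[OF ex] P[OF ey] xy by simp
  show ?thesis
  proof (rule ccontr)
    assume "\<not> (z = x \<or> z = y)"
    then have "(Q + 1) * (x + z) = 2 * k + Q * L" using D[of x z] P[OF ex] P[OF ez] by simp
    then have "(Q + 1) * (z - y) = 0" using Px by (simp add: algebra_simps)
    then show False using Q \<open>\<not> (z = x \<or> z = y)\<close> by simp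
  qed
qed

context mainctx
begin

lemma n_real: "real (card (UNIV :: 'a set)) = real n" using cardF by simp

lemma Tr0 [simp]: "Tr 0 = 0"
  using Tr_add[of 0 0] by (metis add.right_neutral add_left_cancel)

lemma C0_0 [simp]: "0 \<notin> C0" using C0_nz by blast

lemma quad_ex: "\<exists>L U. \<forall>a. a \<noteq> 0 \<longrightarrow>
   (real (hh a))^2 + (real k0 - real (hh a))^2 / (real q - 1) = real k0 + L * real (hh a) + U"
proof -
  obtain l0 u0 :: int where s1: "\<And>x y. x \<noteq> y \<Longrightarrow> x - y \<in> C0 \<Longrightarrow> int (card {z. x - z \<in> C0 \<and> y - z \<in> C0}) = l0"
    and s2: "\<And>x y. x \<noteq> y \<Longrightarrow> x - y \<notin> C0 \<Longrightarrow> int (card {z. x - z \<in> C0 \<and> y - z \<in> C0}) = u0"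
    using srg_data by metis
  define G0 where "G0 v = (real k0 - real_of_int u0) * of_bool (v = 0) + (real_of_int l0 - real_of_int u0) * ind0 v
      + real_of_int u0 * 1" for v
  have conv_eq: "F1.conv ind0 ind0 v = G0 v" for v
  proof (cases "v = 0")
    case True
    have "{x. x \<in> C0 \<and> 0 - x \<in> C0} = C0" using C0_neg by force
    then show ?thesis using True by (simp add: conv_ind0 G0_def ind0_def C0_nz)
  next
    case False
    have cn: "real (card {x. x \<in> C0 \<and> v - x \<in> C0}) = real_of_int (int (card {z. v - z \<in> C0 \<and> 0 - z \<in> C0}))"
      using common_nb by simp
    show ?thesis
    proof (cases "v \<in> C0")
      case True
      then show ?thesis using False cn s1[of v 0] by (simp add: conv_ind0 G0_def ind0_def)
    next
      case nC: False
      then show ?thesis using False cn s2[of v 0] by (simp add: conv_ind0 G0_def ind0_def)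
    qed
  qed
  have "real (hh a)^2 + (real k0 - real (hh a))^2 / (real q - 1)
      = real k0 + (real_of_int l0 - real_of_int u0) * real (hh a) + (real_of_int u0 * (real n / real q) - real_of_int u0)"
    if a: "a \<noteq> 0" for a
  proof -
    have "F1.tr (F1.conv ind0 ind0) a = F1.tr G0 a" using conv_eq by metis
    also have "F1.tr G0 a = (real k0 - real_of_int u0) * 1 + (real_of_int l0 - real_of_int u0) * real (hh a)
        + real_of_int u0 * (real n / real q)"
      unfolding G0_def tr_lin3 F1.tr_delta tr_ind0 F1.tr_one using a n_real by simp
    finally have "F1.tr (F1.conv ind0 ind0) a = \<dots>" .
    moreover have "F1.tr (F1.conv ind0 ind0) a = real (hh a) * real (hh a)
        + (real k0 - real (hh a)) * (real k0 - real (hh a)) / (real q - 1)"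
      using F1.conv_tr[OF invar_ind0 invar_ind0, of a] by (simp add: tr_ind0 sum_ind0)
    ultimately show ?thesis by (simp add: power2_eq_square algebra_simps)
  qed
  then show ?thesis by blast
qed

lemma hh_two: "\<forall>a b c. a \<noteq> 0 \<longrightarrow> b \<noteq> 0 \<longrightarrow> c \<noteq> 0 \<longrightarrow> hh a \<noteq> hh b \<longrightarrow> hh c = hh a \<or> hh c = hh b"
proof (intro allI impI)
  fix a b c :: 'a assume abc: "a \<noteq> 0" "b \<noteq> 0" "c \<noteq> 0" "hh a \<noteq> hh b"
  obtain L U where LU: "\<And>a. a \<noteq> 0 \<Longrightarrow>
   (real (hh a))^2 + (real k0 - real (hh a))^2 / (real q - 1) = real k0 + L * real (hh a) + U"
    using quad_ex by blast
  have "real q - 1 > 0" using q2 by simp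
  from quad_two[OF this LU[OF abc(1)] LU[OF abc(2)] LU[OF abc(3)]] abc(4)
  show "hh c = hh a \<or> hh c = hh b" by simp
qed

lemma hh_zero: "hh 0 = k0" by (simp add: hh_def)

lemma sum_hh: "(\<Sum>a\<in>UNIV. real (hh a)) = real k0 * (real n / real q)"
proof -
  have "(\<Sum>a\<in>UNIV. real (hh a)) = (\<Sum>w\<in>UNIV. F1.tr ind0 w * of_bool (Tr (0 * w) = 0))"
    by (simp add: tr_ind0)
  also have "\<dots> = (\<Sum>v\<in>UNIV. ind0 v * real (card {w. Tr (v * w) = 0 \<and> Tr (0 * w) = 0}))"
    by (rule F1.sum_tr_swap)
  also have "\<dots> = (\<Sum>v\<in>UNIV. ind0 v * (real n / real q))"
  proof (rule sum.cong[OF refl])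
    fix v show "ind0 v * real (card {w. Tr (v * w) = 0 \<and> Tr (0 * w) = 0}) = ind0 v * (real n / real q)"
    proof (cases "v \<in> C0")
      case True
      then have v0: "v \<noteq> 0" using C0_nz by auto
      have "{w. Tr (v * w) = 0 \<and> Tr (0 * w) = 0} = {w. Tr (w * v) = 0}" by (auto simp: mult.commute)
      then show ?thesis using F1.fiber1_real[OF v0 K0] n_real by simp
    qed (simp add: ind0_def)
  qed
  also have "\<dots> = real k0 * (real n / real q)" by (simp only: sum_distrib_right[symmetric] sum_ind0)
  finally show ?thesis .
qed

lemma hh_nonconst: "\<exists>a. a \<noteq> 0 \<and> hh a \<noteq> hh 1"
proof (rule ccontr)
  assume "\<not> (\<exists>a. a \<noteq> 0 \<and> hh a \<noteq> hh 1)"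
  then have const: "\<And>a. a \<noteq> 0 \<Longrightarrow> hh a = hh 1" by blast
  define c where "c = real (hh 1)"
  have "1 < n" using n_gt by simp
  then have n1: "real n - 1 > 0" by (simp del: of_nat_power)
  have "(\<Sum>a\<in>UNIV. real (hh a)) = real (hh 0) + (\<Sum>a\<in>UNIV - {0}. real (hh a))"
    by (simp add: sum.remove)
  also have "(\<Sum>a\<in>UNIV - {0}. real (hh a)) = (\<Sum>a\<in>UNIV - {0::'a}. c)"
  proof (rule sum.cong[OF refl])
    fix a :: 'a assume "a \<in> UNIV - {0}"
    then have "hh a = hh 1" using const by blast
    then show "real (hh a) = c" by (simp add: c_def)
  qed
  also have "\<dots> = (real n - 1) * c" using cardF n_gt by (simp add: card_Diff_singleton of_nat_diff)
  finally have "(real n - 1) * c = real k0 * (real n / real q) - real k0" using sum_hh hh_zero by simp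
  then have cval: "c = real k0 * (real n / real q - 1) / (real n - 1)" using n1 by (simp add: field_simps)
  define t where "t = real k0 / (real n - 1)"
  define f where "f v = 1 * ind0 v + (- t) * 1 + t * of_bool (v = 0)" for v
  have inv: "F1.invar f" unfolding f_def
    by (intro F1.invar_add F1.invar_cmult invar_ind0 F1.invar_const F1.invar_delta)
  have trf: "F1.tr f w = 0" for w
  proof -
    have "F1.tr f w = 1 * real (hh w) + (- t) * F1.tr (\<lambda>v. 1) w + t * 1"
      unfolding f_def tr_lin3 tr_ind0 F1.tr_delta by simp
    also have "\<dots> = 0"
    proof (cases "w = 0")
      case True then show ?thesis using n1 by (simp add: F1.tr_one hh_zero t_def n_real field_simps)
    next
      case False then show ?thesis using n1 const[OF False] cval
        by (simp add: F1.tr_one t_def n_real c_def field_simps)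
    qed
    finally show ?thesis .
  qed
  have f0: "f v = 0" for v by (rule F1.tr_inj[OF inv trf])
  have "t = 1" using f0[of 1] C0_1 by (simp add: f_def ind0_def)
  then have allC0: "v \<in> C0" if "v \<noteq> 0" for v using f0[of v] that by (simp add: f_def ind0_def)
  obtain x y :: 'a where "x \<noteq> y" "x - y \<notin> C0" using srg_data by metis
  then show False using allC0[of "x - y"] by simp
qed

end


context mainctx
begin

definition a1 :: 'a where "a1 = (SOME a. a \<noteq> 0 \<and> hh a \<noteq> hh 1)"
abbreviation "h0 \<equiv> hh 1"
abbreviation "h1 \<equiv> hh a1"

lemma a1: "a1 \<noteq> 0" "h1 \<noteq> h0"
  using someI_ex[OF hh_nonconst] unfolding a1_def by auto

lemma hh_vals: "a \<noteq> 0 \<Longrightarrow> hh a = h0 \<or> hh a = h1"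
  using hh_two a1 by (metis one_neq_zero)

definition Dset :: "'a set" where "Dset = {a. a \<noteq> 0 \<and> hh a = h1}"
abbreviation "r0 \<equiv> card Dset"

lemma D0 [simp]: "0 \<notin> Dset" by (simp add: Dset_def)

lemma D_C0: "c \<in> C0 \<Longrightarrow> (c * a \<in> Dset) = (a \<in> Dset)"
  using hh_C0 C0_nz by (auto simp: Dset_def)

lemma ind_D: "d \<noteq> 0 \<Longrightarrow> (real h1 - real h0) * of_bool (d \<in> Dset) = real (hh d) - real h0"
  using hh_vals[of d] by (auto simp: Dset_def)

lemma Delta_nz: "real h1 - real h0 \<noteq> 0" using a1 by simp

lemma first_moment: "real r0 * (real h1 - real h0) = real k0 * (real n / real q - 1) - (real n - 1) * real h0"
proof -
  have "(\<Sum>a\<in>UNIV - {0}. real (hh a)) = (\<Sum>a\<in>UNIV - {0}. real h0 + (real h1 - real h0) * of_bool (a \<in> Dset))"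
  proof (rule sum.cong[OF refl])
    fix a :: 'a assume "a \<in> UNIV - {0}"
    then show "real (hh a) = real h0 + (real h1 - real h0) * of_bool (a \<in> Dset)" using ind_D[of a] by simp
  qed
  also have "\<dots> = (real n - 1) * real h0 + (real h1 - real h0) * real r0"
  proof -
    have "Dset \<subseteq> UNIV - {0}" by auto
    then have "(UNIV - {0}) \<inter> {a. a \<in> Dset} = Dset" by auto
    then show ?thesis using cardF n_gt
      by (simp add: sum.distrib sum_distrib_left[symmetric] card_Diff_singleton of_nat_diff)
  qed
  finally have A: "(\<Sum>a\<in>UNIV - {0}. real (hh a)) = (real n - 1) * real h0 + (real h1 - real h0) * real r0" .
  have "(\<Sum>a\<in>UNIV. real (hh a)) = real (hh 0) + (\<Sum>a\<in>UNIV - {0}. real (hh a))" by (simp add: sum.remove)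
  then have "real k0 * (real n / real q) = real k0 + (real n - 1) * real h0 + (real h1 - real h0) * real r0"
    using sum_hh A hh_zero by simp
  then show ?thesis by (simp add: algebra_simps)
qed

lemma n_q_real: "real (card (UNIV :: 'a set)) / real q = real n / real q" using cardF by simp

lemma cnt_pair:
  assumes x: "x \<noteq> 0" and e: "e \<noteq> 0" and t: "t \<in> K"
  shows "real (card {d. Tr (d * x) = 0 \<and> Tr (d * e) = t}) =
    (if \<exists>l\<in>K. e = l * x then (if t = 0 then real n / real q else 0) else real n / real q ^ 2)"
proof (cases "\<exists>l\<in>K. e = l * x")
  case True
  then obtain l where l: "l \<in> K" "e = l * x" by blast
  have "Tr (d * e) = l * Tr (d * x)" for d using l Tr_sc[of l "d * x"] by (simp add: mult_ac)
  then have "{d. Tr (d * x) = 0 \<and> Tr (d * e) = t} = (if t = 0 then {d. Tr (d * x) = 0} else {})" by auto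
  then show ?thesis using True F1.fiber1_real[OF x K0] n_q_real by simp
next
  case False
  have F2: "\<not> (\<exists>l\<in>K. x = l * e)"
  proof
    assume "\<exists>l\<in>K. x = l * e"
    then obtain l where l: "l \<in> K" "x = l * e" by blast
    then have "l \<noteq> 0" using x by auto
    then have "e = inverse l * x" using l by simp
    then show False using False Kinv l by blast
  qed
  have "card {v. Tr (v * x) = 0 \<and> Tr (v * e) = t} * q^2 = card (UNIV :: 'a set)"
    using F1.fiber2[OF False F2 t K0] by (simp add: conj_commute)
  then show ?thesis using False q2 cardF by (simp add: field_simps flip: of_nat_mult of_nat_power)
qed

lemma dep_count:
  assumes e: "e \<noteq> 0"
  shows "card {x \<in> C0. \<exists>l\<in>K. e = l * x} = (if e \<in> C0 then q - 1 else 0)"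
proof (cases "e \<in> C0")
  case True
  have "{x \<in> C0. \<exists>l\<in>K. e = l * x} = (\<lambda>l. e / l) ` (K - {0})"
  proof (rule set_eqI, rule iffI)
    fix x assume "x \<in> {x \<in> C0. \<exists>l\<in>K. e = l * x}"
    then obtain l where l: "x \<in> C0" "l \<in> K" "e = l * x" by blast
    then have "l \<noteq> 0" using e by auto
    then have "x = e / l" using l by simp
    then show "x \<in> (\<lambda>l. e / l) ` (K - {0})" using l \<open>l \<noteq> 0\<close> by blast
  next
    fix x assume "x \<in> (\<lambda>l. e / l) ` (K - {0})"
    then obtain l where l: "l \<in> K" "l \<noteq> 0" "x = e / l" by blast
    have "inverse l \<in> C0" using l K_C0 C0_inv by blast
    then have "x \<in> C0" using True l C0_mult by (simp add: divide_inverse)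
    moreover have "e = l * x" using l by simp
    ultimately show "x \<in> {x \<in> C0. \<exists>l\<in>K. e = l * x}" using l by blast
  qed
  moreover have "inj_on (\<lambda>l. e / l) (K - {0})" using e by (auto simp: inj_on_def field_simps)
  ultimately show ?thesis using True Kstar_card by (simp add: card_image)
next
  case False
  have "{x \<in> C0. \<exists>l\<in>K. e = l * x} = {}"
  proof (rule ccontr)
    assume "{x \<in> C0. \<exists>l\<in>K. e = l * x} \<noteq> {}"
    then obtain x l where xl: "x \<in> C0" "l \<in> K" "e = l * x" by blast
    then have "l \<noteq> 0" using e by auto
    then have "e \<in> C0" using xl K_C0 C0_mult by blast
    then show False using False by simp
  qed
  then show ?thesis using False by simp
qed

end


context mainctx
begin

definition Gc :: "'a \<Rightarrow> 'a \<Rightarrow> real" where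
  "Gc e t = (\<Sum>d\<in>UNIV. of_bool (d \<in> Dset) * of_bool (Tr (d * e) = t))"

lemma sum_nz_count: "(\<Sum>d\<in>UNIV. of_bool (d \<noteq> (0::'a)) * of_bool (P d)) = real (card {d. P d}) - of_bool (P 0)"
proof -
  have "(\<Sum>d\<in>UNIV. of_bool (d \<noteq> (0::'a)) * of_bool (P d)) = (\<Sum>d\<in>UNIV. of_bool (P d) - of_bool (d = 0) * (of_bool (P d) :: real))"
    by (rule sum.cong) auto
  also have "\<dots> = real (card {d. P d}) - of_bool (P 0)"
  proof -
    have "{x. x = 0 \<and> P x} = (if P 0 then {0} else {})" by auto
    then show ?thesis by (simp add: sum_subtractf Int_def)
  qed
  finally show ?thesis .
qed

lemma G_formula:
  assumes e: "e \<noteq> 0" and t: "t \<in> K"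
  shows "(real h1 - real h0) * Gc e t =
    real k0 * (real n / real q ^ 2 - of_bool (t = 0)) - real h0 * (real n / real q - of_bool (t = 0))
    + real (if e \<in> C0 then q - 1 else 0) * (of_bool (t = 0) * (real n / real q) - real n / real q ^ 2)"
proof -
  define A where "A = (\<Sum>d\<in>UNIV. of_bool (d \<noteq> 0) * of_bool (Tr (d * e) = t) * real (hh d))"
  define Bs where "Bs = (\<Sum>d\<in>UNIV. of_bool (d \<noteq> (0::'a)) * (of_bool (Tr (d * e) = t) :: real))"
  have s1: "(real h1 - real h0) * Gc e t = A - real h0 * Bs"
  proof -
    have "(real h1 - real h0) * Gc e t =
        (\<Sum>d\<in>UNIV. of_bool (d \<noteq> 0) * of_bool (Tr (d * e) = t) * real (hh d) -
           real h0 * (of_bool (d \<noteq> 0) * of_bool (Tr (d * e) = t)))"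
      unfolding Gc_def sum_distrib_left
    proof (rule sum.cong[OF refl])
      fix d :: 'a
      show "(real h1 - real h0) * (of_bool (d \<in> Dset) * of_bool (Tr (d * e) = t)) =
         of_bool (d \<noteq> 0) * of_bool (Tr (d * e) = t) * real (hh d) - real h0 * (of_bool (d \<noteq> 0) * of_bool (Tr (d * e) = t))"
      proof (cases "d = 0")
        case False
        then show ?thesis using ind_D[OF False] by (simp add: algebra_simps)
      qed simp
    qed
    also have "\<dots> = A - real h0 * Bs"
      by (simp only: A_def Bs_def sum_subtractf sum_distrib_left)
    finally show ?thesis .
  qed
  have Bs: "Bs = real n / real q - of_bool (t = 0)"
    unfolding Bs_def sum_nz_count using F1.fiber1_real[OF e t] n_q_real by simp
  define dep where "dep x = (\<exists>l\<in>K. e = l * x)" for x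
  define Bc where "Bc = of_bool (t = 0) * (real n / real q) - real n / real q ^ 2"
  have "A = (\<Sum>d\<in>UNIV. of_bool (d \<noteq> 0) * of_bool (Tr (d * e) = t) * (\<Sum>x\<in>UNIV. ind0 x * of_bool (Tr (x * d) = 0)))"
    unfolding A_def by (simp add: tr_ind0[symmetric] F1.tr_def)
  also have "\<dots> = (\<Sum>d\<in>UNIV. \<Sum>x\<in>UNIV. ind0 x * (of_bool (d \<noteq> 0) * of_bool (Tr (d * x) = 0 \<and> Tr (d * e) = t)))"
    unfolding sum_distrib_left by (rule sum.cong[OF refl], rule sum.cong[OF refl]) (auto simp: mult.commute)
  also have "\<dots> = (\<Sum>x\<in>UNIV. \<Sum>d\<in>UNIV. ind0 x * (of_bool (d \<noteq> 0) * of_bool (Tr (d * x) = 0 \<and> Tr (d * e) = t)))"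
    by (rule sum.swap)
  also have "\<dots> = (\<Sum>x\<in>UNIV. ind0 x * (real (card {d. Tr (d * x) = 0 \<and> Tr (d * e) = t}) - of_bool (t = 0)))"
    unfolding sum_distrib_left[symmetric] sum_nz_count by simp
  also have "\<dots> = (\<Sum>x\<in>UNIV. ind0 x * ((real n / real q ^ 2 - of_bool (t = 0)) + of_bool (dep x) * Bc))"
  proof (rule sum.cong[OF refl])
    fix x
    show "ind0 x * (real (card {d. Tr (d * x) = 0 \<and> Tr (d * e) = t}) - of_bool (t = 0)) =
          ind0 x * ((real n / real q ^ 2 - of_bool (t = 0)) + of_bool (dep x) * Bc)"
    proof (cases "x \<in> C0")
      case True
      then have "x \<noteq> 0" using C0_nz by auto
      then show ?thesis using cnt_pair[OF _ e t, of x] by (auto simp: dep_def Bc_def)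
    qed (simp add: ind0_def)
  qed
  also have "\<dots> = real k0 * (real n / real q ^ 2 - of_bool (t = 0)) + real (card {x \<in> C0. dep x}) * Bc"
  proof -
    have "(\<Sum>x\<in>UNIV. ind0 x * ((real n / real q ^ 2 - of_bool (t = 0)) + of_bool (dep x) * Bc))
       = (\<Sum>x\<in>UNIV. (real n / real q ^ 2 - of_bool (t = 0)) * ind0 x + Bc * of_bool (x \<in> C0 \<and> dep x))"
      by (rule sum.cong) (auto simp: ind0_def algebra_simps)
    also have "\<dots> = (real n / real q ^ 2 - of_bool (t = 0)) * sum ind0 UNIV + Bc * real (card {x \<in> C0. dep x})"
      by (simp add: sum.distrib sum_distrib_left[symmetric] Int_def)
    finally show ?thesis by (simp add: sum_ind0)
  qed
  finally have "A = real k0 * (real n / real q ^ 2 - of_bool (t = 0)) + real (card {x \<in> C0. dep x}) * Bc" .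
  moreover have "card {x \<in> C0. dep x} = (if e \<in> C0 then q - 1 else 0)"
    unfolding dep_def by (rule dep_count[OF e])
  ultimately show ?thesis using s1 Bs by (simp add: Bc_def)
qed

end


context mainctx
begin

definition fH :: "'a \<times> 'a \<Rightarrow> real" where
  "fH v = (case v of (y, z) \<Rightarrow> of_bool (y * z \<in> Dset))"

abbreviation "BB \<equiv> (\<lambda>(y, z) (\<alpha>, \<beta>). Tr (y * \<alpha> + z * \<beta>)) :: 'a \<times> 'a \<Rightarrow> 'a \<times> 'a \<Rightarrow> 'a"

lemma sum_pair: "(\<Sum>v\<in>UNIV. g v) = (\<Sum>y\<in>UNIV. \<Sum>z\<in>UNIV. (g (y, z) :: real))"
proof -
  have "(\<Sum>v\<in>UNIV. g v) = (\<Sum>v\<in>UNIV \<times> UNIV. g v)" by simp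
  also have "\<dots> = (\<Sum>(y, z)\<in>UNIV \<times> UNIV. g (y, z))" by (simp add: case_prod_beta')
  also have "\<dots> = (\<Sum>y\<in>UNIV. \<Sum>z\<in>UNIV. g (y, z))" by (rule sum.cartesian_product[symmetric])
  finally show ?thesis .
qed

lemma row_reindex:
  fixes y :: 'a
  assumes y: "y \<noteq> 0"
  shows "(\<Sum>z\<in>UNIV. (g (y * z) :: real)) = (\<Sum>d\<in>UNIV. g d)"
  by (rule sum.reindex_bij_witness[of _ "\<lambda>d. d / y" "\<lambda>z. y * z"]) (use y in auto)

lemma row_count: "y \<noteq> 0 \<Longrightarrow> (\<Sum>z\<in>UNIV. of_bool (y * z \<in> Dset)) = real r0"
  using row_reindex[of y "\<lambda>d. of_bool (d \<in> Dset)"] by (simp add: Int_def)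

lemma row_card: "y \<noteq> 0 \<Longrightarrow> card {z. y * z \<in> Dset} = r0"
  using row_count[of y] by (simp add: Int_def)

lemma col_card: "z \<noteq> 0 \<Longrightarrow> card {y. y * z \<in> Dset} = r0"
  using row_card[of z] by (simp add: mult.commute)

lemma col_count: "z \<noteq> 0 \<Longrightarrow> (\<Sum>y\<in>UNIV. of_bool (y * z \<in> Dset)) = real r0"
  using row_count[of z] by (simp add: mult.commute)

lemma sumH: "sum fH UNIV = (real n - 1) * real r0"
proof -
  have "sum fH UNIV = (\<Sum>y\<in>UNIV. \<Sum>z\<in>UNIV. of_bool (y * z \<in> Dset))" by (simp add: sum_pair fH_def)
  also have "\<dots> = (\<Sum>y::'a\<in>UNIV. of_bool (y \<noteq> 0) * real r0)"
    by (rule sum.cong[OF refl]) (auto simp: row_card)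
  also have "\<dots> = (real n - 1) * real r0"
  proof -
    have "{x::'a. x \<noteq> 0} = UNIV - {0}" by auto
    then have "card {x::'a. x \<noteq> 0} = n - 1" using cardF by (simp add: card_Diff_singleton)
    then have c: "real (card {x::'a. x \<noteq> 0}) = real n - 1" using n_gt by (simp add: of_nat_diff)
    show ?thesis using c by (simp add: Int_def)
  qed
  finally show ?thesis .
qed

lemma trH_def2: "F2.tr fH (\<alpha>, \<beta>) = (\<Sum>y\<in>UNIV. \<Sum>z\<in>UNIV. of_bool (y * z \<in> Dset) * of_bool (Tr (y * \<alpha> + z * \<beta>) = 0))"
  unfolding F2.tr_def by (subst sum_pair) (simp add: fH_def)

lemma cnt_Tr0: "\<alpha> \<noteq> 0 \<Longrightarrow> (\<Sum>y\<in>UNIV. of_bool (y \<noteq> 0) * of_bool (Tr (y * \<alpha>) = 0)) = real n / real q - 1"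
  unfolding sum_nz_count using F1.fiber1_real[OF _ K0, of \<alpha>] n_q_real by simp

lemma trH_b: assumes "\<alpha> \<noteq> 0" shows "F2.tr fH (\<alpha>, 0) = real r0 * (real n / real q - 1)"
proof -
  have "F2.tr fH (\<alpha>, 0) = (\<Sum>y\<in>UNIV. of_bool (Tr (y * \<alpha>) = 0) * (\<Sum>z\<in>UNIV. of_bool (y * z \<in> Dset)))"
    unfolding trH_def2 sum_distrib_left by (intro sum.cong refl) auto
  also have "\<dots> = (\<Sum>y::'a\<in>UNIV. real r0 * (of_bool (y \<noteq> 0) * of_bool (Tr (y * \<alpha>) = 0)))"
    by (rule sum.cong[OF refl]) (auto simp: row_card)
  also have "\<dots> = real r0 * (real n / real q - 1)"
    by (simp only: sum_distrib_left[symmetric] cnt_Tr0[OF assms])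
  finally show ?thesis .
qed

lemma trH_c: assumes "\<beta> \<noteq> 0" shows "F2.tr fH (0, \<beta>) = real r0 * (real n / real q - 1)"
proof -
  have "F2.tr fH (0, \<beta>) = (\<Sum>z\<in>UNIV. \<Sum>y\<in>UNIV. of_bool (y * z \<in> Dset) * of_bool (Tr (z * \<beta>) = 0))"
    unfolding trH_def2 by (subst sum.swap) simp
  also have "\<dots> = (\<Sum>z\<in>UNIV. of_bool (Tr (z * \<beta>) = 0) * (\<Sum>y\<in>UNIV. of_bool (y * z \<in> Dset)))"
    unfolding sum_distrib_left by (intro sum.cong refl) auto
  also have "\<dots> = (\<Sum>z::'a\<in>UNIV. real r0 * (of_bool (z \<noteq> 0) * of_bool (Tr (z * \<beta>) = 0)))"
    by (rule sum.cong[OF refl]) (auto simp: col_card)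
  also have "\<dots> = real r0 * (real n / real q - 1)"
    by (simp only: sum_distrib_left[symmetric] cnt_Tr0[OF assms])
  finally show ?thesis .
qed

lemma trH_0: "F2.tr fH (0, 0) = (real n - 1) * real r0"
  using F2.tr_zero[of fH] sumH by (simp add: zero_prod_def)

end


lemma sum_lin4:
  fixes w X Y Z :: "'b \<Rightarrow> real"
  shows "(\<Sum>y\<in>A. w y * (a + b * X y + c * Y y + d * Z y)) =
    a * sum w A + b * (\<Sum>y\<in>A. w y * X y) + c * (\<Sum>y\<in>A. w y * Y y) + d * (\<Sum>y\<in>A. w y * Z y)"
  by (simp add: sum.distrib sum_distrib_left algebra_simps)

lemma aux_lin: "(k::real) * (B - T) - h * (A - T) + (Q * E) * (T * A - B) =
   ((k * B - h * A) + (h - k) * T + (Q * A) * (E * T) + (- Q * B) * E)"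
  by (simp add: algebra_simps)

lemma aux_lin2: "((k::real) * B - h * A) * M + (h - k) * (A - 1) + (Q * A) * c + (- Q * B) * k =
   k * (M * B - (A - 1)) - h * (M * A - (A - 1)) + Q * (c * A - k * B)"
  by (simp add: algebra_simps)

context mainctx
begin

lemma Yb:
  assumes b: "\<beta> \<noteq> 0"
  shows "card {y. y \<noteq> 0 \<and> \<beta> / y \<in> C0 \<and> P y} = card {x \<in> C0. P (\<beta> * x)}"
proof -
  have "{y. y \<noteq> 0 \<and> \<beta> / y \<in> C0 \<and> P y} = (\<lambda>x. \<beta> * x) ` {x \<in> C0. P (\<beta> * x)}"
  proof (rule set_eqI, rule iffI)
    fix y assume y: "y \<in> {y. y \<noteq> 0 \<and> \<beta> / y \<in> C0 \<and> P y}"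
    have "inverse (\<beta> / y) \<in> C0" using y C0_inv by blast
    then have "y / \<beta> \<in> C0" by simp
    moreover have "y = \<beta> * (y / \<beta>)" using b by simp
    ultimately show "y \<in> (\<lambda>x. \<beta> * x) ` {x \<in> C0. P (\<beta> * x)}" using y by (metis (mono_tags) image_eqI mem_Collect_eq)
  next
    fix y assume "y \<in> (\<lambda>x. \<beta> * x) ` {x \<in> C0. P (\<beta> * x)}"
    then obtain x where x: "x \<in> C0" "P (\<beta> * x)" "y = \<beta> * x" by auto
    have "x \<noteq> 0" using x C0_nz by auto
    then have "\<beta> / y = inverse x" using x b by (simp add: field_simps)
    then show "y \<in> {y. y \<noteq> 0 \<and> \<beta> / y \<in> C0 \<and> P y}" using x b C0_inv \<open>x \<noteq> 0\<close> by auto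
  qed
  moreover have "inj_on (\<lambda>x. \<beta> * x) {x \<in> C0. P (\<beta> * x)}" using b by (auto simp: inj_on_def)
  ultimately show ?thesis by (simp add: card_image)
qed

lemma trH_d:
  assumes a: "\<alpha> \<noteq> 0" and b: "\<beta> \<noteq> 0"
  shows "(real h1 - real h0) * F2.tr fH (\<alpha>, \<beta>) =
    real k0 * ((real n - 1) * (real n / real q ^ 2) - (real n / real q - 1))
    - real h0 * ((real n - 1) * (real n / real q) - (real n / real q - 1))
    + (real q - 1) * (real (hh (\<alpha> * \<beta>)) * (real n / real q) - real k0 * (real n / real q ^ 2))"
proof -
  define T where "T y = (of_bool (Tr (y * \<alpha>) = 0) :: real)" for y
  define E where "E y = (of_bool (\<beta> / y \<in> C0) :: real)" for y
  have row: "(\<Sum>z\<in>UNIV. of_bool (y * z \<in> Dset) * of_bool (Tr (y * \<alpha> + z * \<beta>) = 0)) =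
      of_bool (y \<noteq> 0) * Gc (\<beta> / y) (- Tr (y * \<alpha>))" for y
  proof (cases "y = 0")
    case True then show ?thesis by simp
  next
    case False
    have "(\<Sum>z\<in>UNIV. of_bool (y * z \<in> Dset) * of_bool (Tr (y * \<alpha> + z * \<beta>) = 0))
        = (\<Sum>d\<in>UNIV. of_bool (d \<in> Dset) * (of_bool (Tr (y * \<alpha> + d / y * \<beta>) = 0) :: real))"
      by (rule sum.reindex_bij_witness[of _ "\<lambda>d. d / y" "\<lambda>z. y * z"]) (use False in auto)
    also have "\<dots> = Gc (\<beta> / y) (- Tr (y * \<alpha>))"
      unfolding Gc_def
    proof (rule sum.cong[OF refl])
      fix d
      have "Tr (y * \<alpha> + d / y * \<beta>) = Tr (y * \<alpha>) + Tr (d * (\<beta> / y))" by (simp add: Tr_add)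
      then have "(Tr (y * \<alpha> + d / y * \<beta>) = 0) = (Tr (d * (\<beta> / y)) = - Tr (y * \<alpha>))"
        by (auto simp: eq_neg_iff_add_eq_0 add.commute)
      then show "of_bool (d \<in> Dset) * of_bool (Tr (y * \<alpha> + d / y * \<beta>) = 0) =
          (of_bool (d \<in> Dset) * of_bool (Tr (d * (\<beta> / y)) = - Tr (y * \<alpha>)) :: real)" by simp
    qed
    finally show ?thesis using False by simp
  qed
  have "(real h1 - real h0) * F2.tr fH (\<alpha>, \<beta>) =
      (\<Sum>y\<in>UNIV. of_bool (y \<noteq> 0) * ((real h1 - real h0) * Gc (\<beta> / y) (- Tr (y * \<alpha>))))"
    unfolding trH_def2 row sum_distrib_left by (rule sum.cong) auto
  also have "\<dots> = (\<Sum>y\<in>UNIV. of_bool (y \<noteq> 0) * ((real k0 * (real n / real q ^ 2) - real h0 * (real n / real q))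
      + (real h0 - real k0) * T y + ((real q - 1) * (real n / real q)) * (E y * T y)
      + (- (real q - 1) * (real n / real q ^ 2)) * E y))"
  proof (rule sum.cong[OF refl])
    fix y :: 'a
    show "of_bool (y \<noteq> 0) * ((real h1 - real h0) * Gc (\<beta> / y) (- Tr (y * \<alpha>))) =
      of_bool (y \<noteq> 0) * ((real k0 * (real n / real q ^ 2) - real h0 * (real n / real q))
      + (real h0 - real k0) * T y + ((real q - 1) * (real n / real q)) * (E y * T y)
      + (- (real q - 1) * (real n / real q ^ 2)) * E y)"
    proof (cases "y = 0")
      case False
      have e: "\<beta> / y \<noteq> 0" using False b by simp
      have t: "- Tr (y * \<alpha>) \<in> K" using Tr_K Kneg by blast
      have q1: "real (q - Suc 0) = real q - 1" using q2 by (simp add: of_nat_diff)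
      have tt: "of_bool (- Tr (y * \<alpha>) = 0) = T y" by (simp add: T_def)
      have ee: "real (if \<beta> / y \<in> C0 then q - 1 else 0) = (real q - 1) * E y" using q1 by (simp add: E_def)
      have g1: "(real h1 - real h0) * Gc (\<beta> / y) (- Tr (y * \<alpha>)) =
        real k0 * (real n / real q ^ 2 - T y) - real h0 * (real n / real q - T y)
        + ((real q - 1) * E y) * (T y * (real n / real q) - real n / real q ^ 2)"
        using G_formula[OF e t] unfolding tt ee .
      have "(real h1 - real h0) * Gc (\<beta> / y) (- Tr (y * \<alpha>)) =
        ((real k0 * (real n / real q ^ 2) - real h0 * (real n / real q))
        + (real h0 - real k0) * T y + ((real q - 1) * (real n / real q)) * (E y * T y)
        + (- (real q - 1) * (real n / real q ^ 2)) * E y)"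
        by (rule trans[OF g1 aux_lin])
      then show ?thesis by simp
    qed simp
  qed
  also have "\<dots> = (real k0 * (real n / real q ^ 2) - real h0 * (real n / real q)) * (real n - 1)
      + (real h0 - real k0) * (real n / real q - 1)
      + ((real q - 1) * (real n / real q)) * real (hh (\<alpha> * \<beta>))
      + (- (real q - 1) * (real n / real q ^ 2)) * real k0"
  proof -
    have S0: "(\<Sum>y\<in>UNIV. of_bool (y \<noteq> (0::'a))) = (real n - 1 :: real)"
    proof -
      have "{x::'a. x \<noteq> 0} = UNIV - {0}" by auto
      then have "card {x::'a. x \<noteq> 0} = n - 1" using cardF by (simp add: card_Diff_singleton)
      then show ?thesis using n_gt by (simp add: of_nat_diff Int_def)
    qed
    have S1: "(\<Sum>y\<in>UNIV. of_bool (y \<noteq> 0) * T y) = real n / real q - 1"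
      unfolding T_def by (rule cnt_Tr0[OF a])
    have S2: "(\<Sum>y\<in>UNIV. of_bool (y \<noteq> 0) * E y) = real k0"
    proof -
      have "(\<Sum>y\<in>UNIV. of_bool (y \<noteq> 0) * E y) = real (card {y. y \<noteq> 0 \<and> \<beta> / y \<in> C0 \<and> True})"
        unfolding E_def by (simp add: Int_def)
      also have "\<dots> = real k0" using Yb[OF b, of "\<lambda>_. True"] by simp
      finally show ?thesis .
    qed
    have S3: "(\<Sum>y\<in>UNIV. of_bool (y \<noteq> 0) * (E y * T y)) = real (hh (\<alpha> * \<beta>))"
    proof -
      have "(\<Sum>y\<in>UNIV. of_bool (y \<noteq> 0) * (E y * T y)) = real (card {y. y \<noteq> 0 \<and> \<beta> / y \<in> C0 \<and> Tr (y * \<alpha>) = 0})"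
        unfolding E_def T_def by (simp add: Int_def conj_commute conj_left_commute)
      also have "\<dots> = real (card {x \<in> C0. Tr (\<beta> * x * \<alpha>) = 0})" using Yb[OF b, of "\<lambda>y. Tr (y * \<alpha>) = 0"] by simp
      also have "\<dots> = real (hh (\<alpha> * \<beta>))" unfolding hh_def by (simp add: mult_ac)
      finally show ?thesis .
    qed
    show ?thesis unfolding sum_lin4 S0 S1 S2 S3 by (simp add: mult.commute)
  qed
  also have "\<dots> = real k0 * ((real n - 1) * (real n / real q ^ 2) - (real n / real q - 1))
    - real h0 * ((real n - 1) * (real n / real q) - (real n / real q - 1))
    + (real q - 1) * (real (hh (\<alpha> * \<beta>)) * (real n / real q) - real k0 * (real n / real q ^ 2))"
    by (rule aux_lin2)
  finally show ?thesis .
qed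

end


lemma alg_theta:
  fixes q B k h0 h1 hc r Phi :: real
  assumes q: "q \<noteq> 0" and D: "h1 - h0 \<noteq> 0"
    and fm: "r * (h1 - h0) = k * (q * B - 1) - (q * q * B - 1) * h0"
    and ph: "(h1 - h0) * Phi = k * ((q * q * B - 1) * B - (q * B - 1)) - h0 * ((q * q * B - 1) * (q * B) - (q * B - 1))
        + (q - 1) * (hc * (q * B) - k * B)"
    and hc: "hc = h0 \<or> hc = h1"
  shows "q * Phi = (q * q * B - 1) * r + (q - 1) * (if hc = h1 then q * q * B - r else - r)"
proof -
  have key: "(h1 - h0) * (q * Phi - (q * q * B - 1) * r) = (q - 1) * (- k * (q * B - 1) + q * q * B * hc - h0)"
  proof -
    have "(h1 - h0) * (q * Phi - (q * q * B - 1) * r) = q * ((h1 - h0) * Phi) - (q * q * B - 1) * (r * (h1 - h0))"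
      by (simp add: algebra_simps)
    also have "\<dots> = (q - 1) * (- k * (q * B - 1) + q * q * B * hc - h0)"
      unfolding ph fm by (simp add: algebra_simps)
    finally show ?thesis .
  qed
  show ?thesis
  proof (cases "hc = h1")
    case True
    have "(h1 - h0) * ((q - 1) * (q * q * B - r)) = (q - 1) * (q * q * B * (h1 - h0) - r * (h1 - h0))"
      by (simp add: algebra_simps)
    also have "\<dots> = (q - 1) * (- k * (q * B - 1) + q * q * B * hc - h0)"
      unfolding fm using True by (simp add: algebra_simps)
    finally have X: "(h1 - h0) * ((q - 1) * (q * q * B - r)) = (q - 1) * (- k * (q * B - 1) + q * q * B * hc - h0)" .
    have "(h1 - h0) * (q * Phi - (q * q * B - 1) * r) = (h1 - h0) * ((q - 1) * (q * q * B - r))"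
      unfolding key X by (rule refl)
    then have "q * Phi - (q * q * B - 1) * r = (q - 1) * (q * q * B - r)" using D by simp
    then show ?thesis using True by simp
  next
    case False
    then have h: "hc = h0" using hc by simp
    have "(h1 - h0) * ((q - 1) * (- r)) = (q - 1) * (- (r * (h1 - h0)))"
      by (simp add: algebra_simps)
    also have "\<dots> = (q - 1) * (- k * (q * B - 1) + q * q * B * hc - h0)"
      unfolding fm using h by (simp add: algebra_simps)
    finally have X: "(h1 - h0) * ((q - 1) * (- r)) = (q - 1) * (- k * (q * B - 1) + q * q * B * hc - h0)" .
    have "(h1 - h0) * (q * Phi - (q * q * B - 1) * r) = (h1 - h0) * ((q - 1) * (- r))"
      unfolding key X by (rule refl)
    then have "q * Phi - (q * q * B - 1) * r = (q - 1) * (- r)" using D mult_left_cancel by blast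
    then show ?thesis using False by simp
  qed
qed

lemma alg_final:
  fixes q N r Phi th :: real
  assumes q: "q > 1" and ph: "q * Phi = (N - 1) * r + (q - 1) * th" and th: "th = N - r \<or> th = - r"
  shows "Phi * Phi + ((N - 1) * r - Phi) * ((N - 1) * r - Phi) / (q - 1) =
    ((N - 1) * r - (r^2 - r)) * 1 + ((N + r^2 - 3 * r) - (r^2 - r)) * Phi + (r^2 - r) * (N * N / q)"
proof -
  define R where "R = (N - 1) * r"
  have Phi: "Phi = (R + (q - 1) * th) / q" using ph q by (simp add: R_def field_simps)
  have thq: "th * th = (N - 2 * r) * th + r * (N - r)" using th by (auto simp: algebra_simps power2_eq_square)
  have q1: "q - 1 \<noteq> 0" "q \<noteq> 0" using q by auto
  have "q * q * (q - 1) * (Phi * Phi + (R - Phi) * (R - Phi) / (q - 1)) = q * (q - 1) * (R * R + (q - 1) * (th * th))"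
    unfolding Phi using q1 by (simp add: field_simps; simp add: algebra_simps power2_eq_square)
  also have "\<dots> = q * (q - 1) * (R * R + (q - 1) * ((N - 2 * r) * th + r * (N - r)))" using thq by simp
  also have "\<dots> = q * q * (q - 1) * ((R - (r^2 - r)) * 1 + ((N + r^2 - 3 * r) - (r^2 - r)) * Phi + (r^2 - r) * (N * N / q))"
    unfolding Phi R_def using q1 by (simp add: field_simps; simp add: algebra_simps power2_eq_square)
  finally show ?thesis unfolding R_def using q1 by simp
qed

lemma alg_zero:
  fixes N r :: real
  shows "((N - 1) * r) * ((N - 1) * r) + ((N - 1) * r - (N - 1) * r) * ((N - 1) * r - (N - 1) * r) / (q - 1) =
    ((N - 1) * r - (r^2 - r)) * 1 + ((N + r^2 - 3 * r) - (r^2 - r)) * ((N - 1) * r) + (r^2 - r) * (N * N)"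
  by (simp add: algebra_simps power2_eq_square)


context mainctx
begin

definition RR :: real where "RR = (real n - 1) * real r0"
definition lam :: real where "lam = real n + (real r0)^2 - 3 * real r0"
definition mu :: real where "mu = (real r0)^2 - real r0"
definition GG :: "'a \<times> 'a \<Rightarrow> real" where
  "GG v = (RR - mu) * of_bool (v = 0) + (lam - mu) * fH v + mu * 1"

lemma invar_fH: "F2.invar fH"
  unfolding F2.invar_def
proof (intro ballI allI)
  fix a :: 'a and v :: "'a \<times> 'a" assume a: "a \<in> K - {0}"
  obtain y z where v: "v = (y, z)" by (cases v)
  have "a * a \<in> C0" using a K_C0 C0_mult by blast
  then have "(a * a * (y * z) \<in> Dset) = (y * z \<in> Dset)" by (rule D_C0)
  then show "fH (case v of (y, z) \<Rightarrow> (a * y, a * z)) = fH v" by (simp add: v fH_def mult_ac)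
qed

lemma tr2_lin3: "F2.tr (\<lambda>v. a * f1 v + b * f2 v + c * f3 v) w = a * F2.tr f1 w + b * F2.tr f2 w + c * F2.tr f3 w"
  unfolding F2.tr_def by (simp only: sum_distrib_left distrib_right sum.distrib mult.assoc)

lemma card_pairs: "real (card (UNIV :: ('a \<times> 'a) set)) = real n * real n"
proof -
  have "card (UNIV :: ('a \<times> 'a) set) = card (UNIV :: 'a set) * card (UNIV :: 'a set)"
    by (simp add: card_cartesian_product flip: UNIV_Times_UNIV)
  then show ?thesis using cardF by simp
qed

lemma sumH_RR: "sum fH UNIV = RR" by (simp add: sumH RR_def)

lemma Phi_vals:
  assumes w: "w \<noteq> 0"
  shows "\<exists>th. (th = real n - real r0 \<or> th = - real r0) \<and> real q * F2.tr fH w = RR + (real q - 1) * th"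
proof -
  obtain \<alpha> \<beta> where wab: "w = (\<alpha>, \<beta>)" by (cases w)
  have q0: "real q \<noteq> 0" using q2 by simp
  have simple: "real q * (real r0 * (real n / real q - 1)) = RR + (real q - 1) * (- real r0)"
    using q0 by (simp add: RR_def field_simps)
  show ?thesis
  proof (cases "\<beta> = 0")
    case True
    then have "\<alpha> \<noteq> 0" using w wab by (simp add: zero_prod_def)
    then show ?thesis using simple trH_b True wab by auto
  next
    case b: False
    show ?thesis
    proof (cases "\<alpha> = 0")
      case True
      then show ?thesis using simple trH_c[OF b] wab by auto
    next
      case a: False
      define B where "B = real n / real q ^ 2"
      have qB: "real q * B = real n / real q" "real q * real q * B = real n"
        using q0 by (simp_all add: B_def field_simps power2_eq_square)
      have D: "real h1 - real h0 \<noteq> 0" by (rule Delta_nz)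
      have fm: "real r0 * (real h1 - real h0) = real k0 * (real q * B - 1) - (real q * real q * B - 1) * real h0"
        unfolding qB by (rule first_moment)
      have ph: "(real h1 - real h0) * F2.tr fH (\<alpha>, \<beta>) = real k0 * ((real q * real q * B - 1) * B - (real q * B - 1))
          - real h0 * ((real q * real q * B - 1) * (real q * B) - (real q * B - 1))
          + (real q - 1) * (real (hh (\<alpha> * \<beta>)) * (real q * B) - real k0 * B)"
        unfolding qB using trH_d[OF a b] by (simp add: B_def)
      have ab: "\<alpha> * \<beta> \<noteq> 0" using a b by simp
      have hc: "real (hh (\<alpha> * \<beta>)) = real h0 \<or> real (hh (\<alpha> * \<beta>)) = real h1" using hh_vals[OF ab] by auto
      from alg_theta[OF q0 D fm ph hc]
      have "real q * F2.tr fH (\<alpha>, \<beta>) = (real n - 1) * real r0 + (real q - 1) *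
          (if real (hh (\<alpha> * \<beta>)) = real h1 then real n - real r0 else - real r0)"
        unfolding qB .
      then show ?thesis using wab by (auto simp: RR_def)
    qed
  qed
qed

lemma T_eq_G: "F2.conv fH fH v = GG v"
proof -
  have invG: "F2.invar GG" unfolding GG_def
    by (intro F2.invar_add F2.invar_cmult F2.invar_delta invar_fH F2.invar_const)
  have inv: "F2.invar (\<lambda>v. F2.conv fH fH v + (- 1) * GG v)"
    by (intro F2.invar_add F2.invar_cmult F2.invar_conv invar_fH invG)
  have q1: "real q > 1" using q2 by simp
  have tr: "F2.tr (\<lambda>v. F2.conv fH fH v + (- 1) * GG v) w = 0" for w
  proof -
    define Phi where "Phi = F2.tr fH w"
    have trT: "F2.tr (F2.conv fH fH) w = Phi * Phi + (RR - Phi) * (RR - Phi) / (real q - 1)"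
      using F2.conv_tr[OF invar_fH invar_fH, of w] by (simp add: sumH_RR Phi_def)
    have trG: "F2.tr GG w = (RR - mu) * 1 + (lam - mu) * Phi + mu * F2.tr (\<lambda>v. 1) w"
      unfolding GG_def tr2_lin3 F2.tr_delta Phi_def ..
    have "F2.tr (F2.conv fH fH) w = F2.tr GG w"
    proof (cases "w = 0")
      case True
      then have "Phi = RR" using F2.tr_zero sumH_RR by (simp add: Phi_def)
      then show ?thesis unfolding trT trG using True F2.tr_one card_pairs alg_zero[of "real n" "real r0"]
        by (simp add: RR_def lam_def mu_def)
    next
      case False
      obtain th where th: "th = real n - real r0 \<or> th = - real r0" "real q * Phi = RR + (real q - 1) * th"
        using Phi_vals[OF False] Phi_def by blast
      have "Phi * Phi + ((real n - 1) * real r0 - Phi) * ((real n - 1) * real r0 - Phi) / (real q - 1) =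
        ((real n - 1) * real r0 - ((real r0)^2 - real r0)) * 1 + ((real n + (real r0)^2 - 3 * real r0) - ((real r0)^2 - real r0)) * Phi
        + ((real r0)^2 - real r0) * (real n * real n / real q)"
        using alg_final[OF q1 _ th(1)] th(2) by (simp add: RR_def)
      then show ?thesis unfolding trT trG using False F2.tr_one card_pairs
        by (simp add: RR_def lam_def mu_def)
    qed
    then show ?thesis unfolding F2.tr_add F2.tr_cmult by simp
  qed
  have "F2.conv fH fH v + (- 1) * GG v = 0" by (rule F2.tr_inj[OF inv tr])
  then show ?thesis by simp
qed

end


context mainctx
begin

lemma omega_pow_nz: "\<omega> ^ i \<noteq> 0" using omega_nz by simp

lemma cycloC_card: "card {x \<in> cyclo_C N \<omega> i. Tr x = 0} = hh (\<omega> ^ i)"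
proof -
  have "{x \<in> cyclo_C N \<omega> i. Tr x = 0} = (\<lambda>x. \<omega> ^ i * x) ` {x \<in> C0. Tr (x * \<omega> ^ i) = 0}"
    unfolding cyclo_C_def by (auto simp: mult.commute)
  moreover have "inj_on (\<lambda>x. \<omega> ^ i * x) {x \<in> C0. Tr (x * \<omega> ^ i) = 0}"
    using omega_pow_nz by (auto simp: inj_on_def)
  ultimately show ?thesis by (simp add: card_image hh_def)
qed

lemma sub_n_eq: "sub_n q m N \<omega> i = int (hh (\<omega> ^ i) div (q - 1))"
  unfolding sub_n_def cycloC_card ..

lemma hh_div_inj: "hh a div (q - 1) = hh b div (q - 1) \<Longrightarrow> hh a = hh b"
  using hh_dvd[of a] hh_dvd[of b] by (metis dvd_div_mult_self)

lemma exists_I: "\<exists>i<N. hh (\<omega> ^ i) = h1"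
proof -
  obtain j c where jc: "j < N" "c \<in> C0" "a1 = \<omega> ^ j * c" using C0_decomp[OF a1(1)] by blast
  have "hh a1 = hh (c * \<omega> ^ j)" using jc by (simp add: mult.commute)
  also have "\<dots> = hh (\<omega> ^ j)" by (rule hh_C0[OF jc(2)])
  finally show ?thesis using jc by metis
qed

lemma div_ne: "h1 div (q - 1) \<noteq> h0 div (q - 1)"
  using hh_div_inj a1(2) by metis

lemma delta_eq: "subdiff_delta q m N \<omega> = int (h1 div (q - 1)) - int (h0 div (q - 1))"
  unfolding subdiff_delta_def
proof (rule the_equality)
  have s0: "sub_n q m N \<omega> 0 = int (h0 div (q - 1))" by (simp add: sub_n_eq)
  obtain i where i: "i < N" "hh (\<omega> ^ i) = h1" using exists_I by blast
  show "int (h1 div (q - 1)) - int (h0 div (q - 1)) \<noteq> 0 \<and>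
    (\<exists>i<N. sub_n q m N \<omega> i - sub_n q m N \<omega> 0 = int (h1 div (q - 1)) - int (h0 div (q - 1)))"
    using div_ne i s0 by (auto simp: sub_n_eq)
  fix d assume d: "d \<noteq> 0 \<and> (\<exists>i<N. sub_n q m N \<omega> i - sub_n q m N \<omega> 0 = d)"
  then obtain i where i: "i < N" "sub_n q m N \<omega> i - sub_n q m N \<omega> 0 = d" by blast
  have "hh (\<omega> ^ i) = h0 \<or> hh (\<omega> ^ i) = h1" using hh_vals omega_pow_nz by blast
  then show "d = int (h1 div (q - 1)) - int (h0 div (q - 1))" using i d s0 by (auto simp: sub_n_eq)
qed

lemma I_eq: "subdiff_set q m N \<omega> = {i. i < N \<and> hh (\<omega> ^ i) = h1}"
proof -
  have "(sub_n q m N \<omega> i - sub_n q m N \<omega> 0 = subdiff_delta q m N \<omega>) = (hh (\<omega> ^ i) = h1)" for i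
  proof -
    have "(sub_n q m N \<omega> i - sub_n q m N \<omega> 0 = subdiff_delta q m N \<omega>) = (hh (\<omega> ^ i) div (q - 1) = h1 div (q - 1))"
      by (simp add: delta_eq sub_n_eq)
    also have "\<dots> = (hh (\<omega> ^ i) = h1)" using hh_div_inj[of "\<omega> ^ i" a1] by auto
    finally show ?thesis .
  qed
  then show ?thesis unfolding subdiff_set_def by auto
qed

definition Hs :: "('a \<times> 'a) set" where
  "Hs = {(y, inverse y * x * \<omega> ^ l) | x y l. x \<in> C0 \<and> y \<noteq> 0 \<and> l \<in> subdiff_set q m N \<omega>}"

lemma Hs_iff: "(v \<in> Hs) = (fst v * snd v \<in> Dset)"
proof
  assume "v \<in> Hs"
  then obtain x y l where xyl: "v = (y, inverse y * x * \<omega> ^ l)" "x \<in> C0" "y \<noteq> 0" "l < N" "hh (\<omega> ^ l) = h1"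
    unfolding Hs_def I_eq by blast
  have "fst v * snd v = x * \<omega> ^ l" using xyl by (simp add: field_simps)
  moreover have "hh (x * \<omega> ^ l) = h1" using hh_C0[OF xyl(2)] xyl(5) by simp
  moreover have "x * \<omega> ^ l \<noteq> 0" using xyl C0_nz omega_pow_nz by simp
  ultimately show "fst v * snd v \<in> Dset" by (simp add: Dset_def)
next
  assume v: "fst v * snd v \<in> Dset"
  obtain y z where yz: "v = (y, z)" by (cases v)
  have nz: "y * z \<noteq> 0" "hh (y * z) = h1" using v yz by (auto simp: Dset_def)
  obtain j c where jc: "j < N" "c \<in> C0" "y * z = \<omega> ^ j * c" using C0_decomp[OF nz(1)] by blast
  have "hh (\<omega> ^ j) = h1" using hh_C0[OF jc(2), of "\<omega> ^ j"] jc nz by (simp add: mult.commute)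
  then have jI: "j \<in> subdiff_set q m N \<omega>" using jc I_eq by simp
  have y0: "y \<noteq> 0" using nz by auto
  have "z = inverse y * c * \<omega> ^ j" using jc y0 by (simp add: field_simps)
  then show "v \<in> Hs" unfolding Hs_def using yz jc y0 jI by blast
qed

lemma fH_Hs: "fH v = of_bool (v \<in> Hs)"
  by (cases v) (simp add: fH_def Hs_iff)

lemma D_union: "Dset = (\<Union>l\<in>subdiff_set q m N \<omega>. (\<lambda>x. \<omega> ^ l * x) ` C0)"
proof (rule set_eqI, rule iffI)
  fix a assume a: "a \<in> Dset"
  then have nz: "a \<noteq> 0" "hh a = h1" by (auto simp: Dset_def)
  obtain j c where jc: "j < N" "c \<in> C0" "a = \<omega> ^ j * c" using C0_decomp[OF nz(1)] by blast
  have "hh (\<omega> ^ j) = h1" using hh_C0[OF jc(2), of "\<omega> ^ j"] jc nz by (simp add: mult.commute)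
  then have "j \<in> subdiff_set q m N \<omega>" using jc I_eq by simp
  then show "a \<in> (\<Union>l\<in>subdiff_set q m N \<omega>. (\<lambda>x. \<omega> ^ l * x) ` C0)" using jc by blast
next
  fix a assume "a \<in> (\<Union>l\<in>subdiff_set q m N \<omega>. (\<lambda>x. \<omega> ^ l * x) ` C0)"
  then obtain l x where lx: "l \<in> subdiff_set q m N \<omega>" "x \<in> C0" "a = \<omega> ^ l * x" by blast
  have "hh a = h1" using lx hh_C0[OF lx(2), of "\<omega> ^ l"] I_eq by (simp add: mult.commute)
  moreover have "a \<noteq> 0" using lx C0_nz omega_pow_nz by simp
  ultimately show "a \<in> Dset" by (simp add: Dset_def)
qed

lemma r_eq: "(q ^ m - 1) * card (subdiff_set q m N \<omega>) div N = r0"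
proof -
  let ?I = "subdiff_set q m N \<omega>"
  have finI: "finite ?I" using I_eq by simp
  have "r0 = (\<Sum>l\<in>?I. card ((\<lambda>x. \<omega> ^ l * x) ` C0))"
    unfolding D_union
  proof (rule card_UN_disjoint[OF finI])
    show "\<forall>i\<in>?I. finite ((\<lambda>x. \<omega> ^ i * x) ` C0)" by simp
    show "\<forall>i\<in>?I. \<forall>j\<in>?I. i \<noteq> j \<longrightarrow> (\<lambda>x. \<omega> ^ i * x) ` C0 \<inter> (\<lambda>x. \<omega> ^ j * x) ` C0 = {}"
      using C0_coset_unique I_eq by fastforce
  qed
  also have "\<dots> = (\<Sum>l\<in>?I. k0)"
  proof (rule sum.cong[OF refl])
    fix l show "card ((\<lambda>x. \<omega> ^ l * x) ` C0) = k0"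
    proof -
      have "inj_on (\<lambda>x. \<omega> ^ l * x) C0" using omega_pow_nz[of l] by (auto simp: inj_on_def)
      then show ?thesis by (simp add: card_image)
    qed
  qed
  finally have "r0 = card ?I * k0" by simp
  moreover have "(q ^ m - 1) * card ?I div N = k0 * card ?I"
  proof -
    have e: "q ^ m - 1 = N * k0" using card_C0 by (simp add: mult.commute)
    show ?thesis unfolding e using Npos by (simp add: mult.assoc)
  qed
  ultimately show ?thesis by simp
qed

end


lemma real_int_eq: "real c = real_of_int z \<Longrightarrow> int c = z"
  by (metis of_int_eq_iff of_int_of_nat_eq)

context mainctx
begin

lemma fH_neg: "fH (- v) = fH v"
  by (cases v) (simp add: fH_def)

lemma deg_real: "real (card {y. x - y \<in> Hs}) = RR"
proof -
  have "real (card {y. x - y \<in> Hs}) = (\<Sum>y\<in>UNIV. fH (x - y))" by (simp add: fH_Hs Int_def)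
  also have "\<dots> = (\<Sum>v\<in>UNIV. fH v)"
    by (rule sum.reindex_bij_witness[of _ "\<lambda>v. x - v" "\<lambda>y. x - y"]) auto
  finally show ?thesis using sumH_RR by simp
qed

lemma common_real: "real (card {z. x - z \<in> Hs \<and> y - z \<in> Hs}) = F2.conv fH fH (x - y)"
proof -
  have "real (card {z. x - z \<in> Hs \<and> y - z \<in> Hs}) = (\<Sum>z\<in>UNIV. fH (x - z) * fH (y - z))"
    by (simp add: fH_Hs Int_def)
  also have "\<dots> = (\<Sum>v\<in>UNIV. fH v * fH (x - y - v))"
  proof (rule sum.reindex_bij_witness[of _ "\<lambda>v. x - v" "\<lambda>z. x - z"])
    fix z
    have "fH (x - y - (x - z)) = fH (z - y)" by (simp add: algebra_simps)
    moreover have "fH (z - y) = fH (y - z)" using fH_neg[of "y - z"] by simp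
    ultimately show "fH (x - z) * fH (x - y - (x - z)) = fH (x - z) * fH (y - z)" by (simp add: fH_neg)
  qed auto
  finally show ?thesis by (simp add: F2.conv_def)
qed

lemma main_srg: "srg (UNIV :: ('a \<times> 'a) set) (cayley_adj Hs)
   (int n ^ 2) (int r0 * (int n - 1)) (int n + int r0 ^ 2 - 3 * int r0) (int r0 ^ 2 - int r0)"
  unfolding srg_def cayley_adj_def
proof (intro conjI ballI impI)
  show "finite (UNIV :: ('a \<times> 'a) set)" by simp
  show "int (card (UNIV :: ('a \<times> 'a) set)) = int n ^ 2"
    by (rule real_int_eq) (simp add: card_pairs power2_eq_square)
  fix x y :: "'a \<times> 'a"
  show "x - y \<in> Hs \<Longrightarrow> y - x \<in> Hs"
    by (cases x; cases y) (simp add: Hs_iff algebra_simps)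
  show "x - x \<notin> Hs" by (simp add: Hs_iff)
  show "int (card {y \<in> UNIV. x - y \<in> Hs}) = int r0 * (int n - 1)"
    by (rule real_int_eq) (simp add: deg_real RR_def mult.commute)
  assume xy: "x \<noteq> y \<and> x - y \<in> Hs"
  then have "x - y \<noteq> 0" by simp
  then show "int (card {z \<in> UNIV. x - z \<in> Hs \<and> y - z \<in> Hs}) = int n + int r0 ^ 2 - 3 * int r0"
    using xy common_real[of x y] T_eq_G[of "x - y"]
    by (intro real_int_eq) (simp add: GG_def fH_Hs lam_def mu_def)
next
  fix x y :: "'a \<times> 'a"
  assume xy: "x \<noteq> y \<and> x - y \<notin> Hs"
  then have "x - y \<noteq> 0" by simp
  then show "int (card {z \<in> UNIV. x - z \<in> Hs \<and> y - z \<in> Hs}) = int r0 ^ 2 - int r0"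
    using xy common_real[of x y] T_eq_G[of "x - y"]
    by (intro real_int_eq) (simp add: GG_def fH_Hs lam_def mu_def)
next
  have "a1 \<in> Dset" using a1 by (simp add: Dset_def)
  then have "(a1, 1) - 0 \<in> Hs" by (simp add: Hs_iff)
  moreover have "(a1, 1) \<noteq> (0 :: 'a \<times> 'a)" by (simp add: zero_prod_def)
  ultimately show "\<exists>x\<in>UNIV. \<exists>y\<in>UNIV. x \<noteq> y \<and> x - y \<in> Hs" by blast
next
  have "(0, 1) - 0 \<notin> Hs" by (simp add: Hs_iff)
  moreover have "(0, 1) \<noteq> (0 :: 'a \<times> 'a)" by (simp add: zero_prod_def)
  ultimately show "\<exists>x\<in>UNIV. \<exists>y\<in>UNIV. x \<noteq> y \<and> x - y \<notin> Hs" by blast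
qed

end

theorem proposition3p4:
  fixes p f q m N :: nat and \<omega> :: "'a::{field,finite}"
  assumes "prime p" and "f \<ge> 1" and "q = p ^ f" and "m \<ge> 2"
    and "card (UNIV :: 'a set) = q ^ m"
    and "primitive_elem \<omega>"
    and "N > 0" and "N dvd q ^ m - 1"
    and "Fq_star q \<subseteq> cyclo_C0 N \<omega>"
    and "is_srg (UNIV :: 'a set) (cayley_adj (cyclo_C0 N \<omega>))"
  defines "H \<equiv> {(y, inverse y * x * \<omega> ^ l) | x y l.
                 x \<in> cyclo_C0 N \<omega> \<and> y \<noteq> 0 \<and> l \<in> subdiff_set q m N \<omega>}"
    and "n \<equiv> q ^ m"
    and "r \<equiv> (q ^ m - 1) * card (subdiff_set q m N \<omega>) div N"
  shows "srg (UNIV :: ('a \<times> 'a) set) (cayley_adj H)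
           (int n ^ 2) (int r * (int n - 1)) (int n + int r ^ 2 - 3 * int r) (int r ^ 2 - int r)"
proof -
  interpret mainctx p f q m N \<omega>
    by (unfold_locales) (use assms in auto)
  have "H = Hs" unfolding H_def Hs_def ..
  moreover have "r = r0" unfolding r_def by (rule r_eq)
  ultimately show ?thesis unfolding n_def using main_srg by simp
qed


end
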